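(* The set $\mathcal{B}$ of monomials \[ \prod_{a=1}^n \psi_a^{p_a}(\psi_a^* )^{d_a}\omega_a^{v_a}\qquad(\text{factors taken in the order } a=1,2,\dots,n), \] where $p_a,d_a\in\{0,1\}$ and $v_a\in\{0,1,\dots,2k-1\}$ for each $a$, is a $\mathbb{k}$-basis of $\mathrm{Cl}_q(n,k)$.
   Context: Let $\mathbb{k}$ be a field of characteristic different from $2$, let $q\in\mathbb{k}^\times$, and let $n,k$ be positive integers. The quantum Clifford algebra $\mathrm{Cl}_q(n,k)$ is the unital associative $\mathbb{k}$-algebra generated by $\psi_a,\psi_a^*,\omega_a,\omega_a^{-1}$ for $a\in\{1,\dots,n\}$, subject to the relations (for all $a,b\in\{1,\dots,n\}$): $\omega_a\omega_b=\omega_b\omega_a$; $\omega_a\omega_a^{-1}=1$; $\omega_a\psi_b=q^{\delta_{ab}}\psi_b\omega_a$; $\omega_a\psi_b^*=q^{-\delta_{ab}}\psi_b^*\omega_a$; $\psi_a\psi_b+\psi_b\psi_a=0$; $\psi_a^*\psi_b^*+\psi_b^*\psi_a^*=0$; $\psi_a\psi_a^*+q^k\psi_a^*\psi_a=\omega_a^{-k}$; $\psi_a\psi_a^*+q^{-k}\psi_a^*\psi_a=\omega_a^{k}$; and $\psi_a\psi_b^*+\psi_b^*\psi_a=0$ if $a\neq b$. *)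

theory Defs
  imports Main
begin

text \<open>Elements of the free algebra over the field 'k on an alphabet of letters
are functions from words (lists of letters) to 'k with finite support.
The operations below are defined for all functions; multiplication is
concatenation-convolution, which is a finite sum for every word.\<close>

definition fa_mono :: "'g list \<Rightarrow> 'g list \<Rightarrow> 'k::field" where
  "fa_mono w = (\<lambda>u. if u = w then 1 else 0)"

definition fa_one :: "'g list \<Rightarrow> 'k::field" where
  "fa_one = fa_mono []"

definition fa_add :: "('g list \<Rightarrow> 'k::field) \<Rightarrow> ('g list \<Rightarrow> 'k) \<Rightarrow> 'g list \<Rightarrow> 'k" where
  "fa_add f g = (\<lambda>u. f u + g u)"

definition fa_sub :: "('g list \<Rightarrow> 'k::field) \<Rightarrow> ('g list \<Rightarrow> 'k) \<Rightarrow> 'g list \<Rightarrow> 'k" where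
  "fa_sub f g = (\<lambda>u. f u - g u)"

definition fa_smult :: "'k::field \<Rightarrow> ('g list \<Rightarrow> 'k) \<Rightarrow> 'g list \<Rightarrow> 'k" where
  "fa_smult c f = (\<lambda>u. c * f u)"

definition fa_mult :: "('g list \<Rightarrow> 'k::field) \<Rightarrow> ('g list \<Rightarrow> 'k) \<Rightarrow> 'g list \<Rightarrow> 'k" where
  "fa_mult f g = (\<lambda>u. \<Sum>(x, y) \<in> {(x, y). x @ y = u}. f x * g y)"

fun fa_pow :: "('g list \<Rightarrow> 'k::field) \<Rightarrow> nat \<Rightarrow> 'g list \<Rightarrow> 'k" where
  "fa_pow f 0 = fa_one"
| "fa_pow f (Suc m) = fa_mult f (fa_pow f m)"

definition free_alg :: "'g set \<Rightarrow> ('g list \<Rightarrow> 'k::field) set" where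
  "free_alg L = {f. finite {w. f w \<noteq> 0} \<and> (\<forall>w. f w \<noteq> 0 \<longrightarrow> set w \<subseteq> L)}"

inductive_set two_sided_ideal :: "'g set \<Rightarrow> ('g list \<Rightarrow> 'k::field) set \<Rightarrow> ('g list \<Rightarrow> 'k) set"
  for L :: "'g set" and R :: "('g list \<Rightarrow> 'k) set" where
  gen: "r \<in> R \<Longrightarrow> r \<in> two_sided_ideal L R"
| zero: "(\<lambda>_. 0) \<in> two_sided_ideal L R"
| add: "f \<in> two_sided_ideal L R \<Longrightarrow> g \<in> two_sided_ideal L R \<Longrightarrow> fa_add f g \<in> two_sided_ideal L R"
| smult: "f \<in> two_sided_ideal L R \<Longrightarrow> fa_smult c f \<in> two_sided_ideal L R"
| mult: "f \<in> two_sided_ideal L R \<Longrightarrow> set u \<subseteq> L \<Longrightarrow> set w \<subseteq> L \<Longrightarrow>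
         fa_mult (fa_mult (fa_mono u) f) (fa_mono w) \<in> two_sided_ideal L R"

datatype cgen = Psi nat | PsiS nat | Om nat | OmInv nat

definition cl_letters :: "nat \<Rightarrow> cgen set" where
  "cl_letters n = (\<Union>a\<in>{1..n}. {Psi a, PsiS a, Om a, OmInv a})"

definition g :: "cgen \<Rightarrow> cgen list \<Rightarrow> 'k::field" where
  "g x = fa_mono [x]"

text \<open>The relation \<omega>_a^{-1} \<omega>_a = 1 is included since \<omega>_a^{-1}
denotes the inverse of \<omega>_a.\<close>
definition cl_relations :: "nat \<Rightarrow> nat \<Rightarrow> 'k::field \<Rightarrow> (cgen list \<Rightarrow> 'k) set" where
  "cl_relations n k q = (\<Union>a\<in>{1..n}. \<Union>b\<in>{1..n}.
     {fa_sub (fa_mult (g (Om a)) (g (Om b))) (fa_mult (g (Om b)) (g (Om a))),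
      fa_sub (fa_mult (g (Om a)) (g (OmInv a))) fa_one,
      fa_sub (fa_mult (g (OmInv a)) (g (Om a))) fa_one,
      fa_sub (fa_mult (g (Om a)) (g (Psi b)))
             (fa_smult (if a = b then q else 1) (fa_mult (g (Psi b)) (g (Om a)))),
      fa_sub (fa_mult (g (Om a)) (g (PsiS b)))
             (fa_smult (if a = b then inverse q else 1) (fa_mult (g (PsiS b)) (g (Om a)))),
      fa_add (fa_mult (g (Psi a)) (g (Psi b))) (fa_mult (g (Psi b)) (g (Psi a))),
      fa_add (fa_mult (g (PsiS a)) (g (PsiS b))) (fa_mult (g (PsiS b)) (g (PsiS a))),
      fa_sub (fa_add (fa_mult (g (Psi a)) (g (PsiS a)))
                     (fa_smult (q ^ k) (fa_mult (g (PsiS a)) (g (Psi a)))))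
             (fa_pow (g (OmInv a)) k),
      fa_sub (fa_add (fa_mult (g (Psi a)) (g (PsiS a)))
                     (fa_smult (inverse (q ^ k)) (fa_mult (g (PsiS a)) (g (Psi a)))))
             (fa_pow (g (Om a)) k)}
     \<union> (if a \<noteq> b then
          {fa_add (fa_mult (g (Psi a)) (g (PsiS b))) (fa_mult (g (PsiS b)) (g (Psi a)))}
        else {}))"

definition cl_ideal :: "nat \<Rightarrow> nat \<Rightarrow> 'k::field \<Rightarrow> (cgen list \<Rightarrow> 'k) set" where
  "cl_ideal n k q = two_sided_ideal (cl_letters n) (cl_relations n k q)"

definition cl_monomial_word :: "nat \<Rightarrow> (nat \<Rightarrow> nat) \<Rightarrow> (nat \<Rightarrow> nat) \<Rightarrow> (nat \<Rightarrow> nat) \<Rightarrow> cgen list" where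
  "cl_monomial_word n p d v =
     concat (map (\<lambda>a. replicate (p a) (Psi a) @ replicate (d a) (PsiS a) @ replicate (v a) (Om a))
                 [1..<n+1])"

definition cl_basis_words :: "nat \<Rightarrow> nat \<Rightarrow> cgen list set" where
  "cl_basis_words n k = {cl_monomial_word n p d v | p d v.
      \<forall>a\<in>{1..n}. p a \<in> {0, 1} \<and> d a \<in> {0, 1} \<and> v a \<in> {0..<2*k}}"

end

theory Submission
  imports Defs
begin

lemma split_set: "{(x, y). x @ y = u} = (\<lambda>i. (take i u, drop i u)) ` {..length u}"
proof (intro set_eqI iffI)
  fix p assume "p \<in> {(x, y). x @ y = u}"
  then obtain x y where p: "p = (x, y)" "x @ y = u" by auto
  then show "p \<in> (\<lambda>i. (take i u, drop i u)) ` {..length u}"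
    by (intro image_eqI[of _ _ "length x"]) auto
qed auto

lemma finite_split: "finite {(x, y). x @ y = (u::'a list)}"
  unfolding split_set by simp

typedef 'k fa = "UNIV :: (cgen list \<Rightarrow> 'k::field) set" by auto

instantiation fa :: (field) ring_1
begin
definition "zero_fa = Abs_fa (\<lambda>_. 0)"
definition "one_fa = Abs_fa fa_one"
definition "plus_fa x y = Abs_fa (fa_add (Rep_fa x) (Rep_fa y))"
definition "minus_fa x y = Abs_fa (fa_sub (Rep_fa x) (Rep_fa y))"
definition "uminus_fa x = Abs_fa (\<lambda>u. - Rep_fa x u)"
definition "times_fa x y = Abs_fa (fa_mult (Rep_fa x) (Rep_fa y))"

lemma Rep_fa_ops:
  "Rep_fa 0 = (\<lambda>_. 0)" "Rep_fa 1 = fa_one"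
  "Rep_fa (x + y) = (\<lambda>u. Rep_fa x u + Rep_fa y u)"
  "Rep_fa (x - y) = (\<lambda>u. Rep_fa x u - Rep_fa y u)"
  "Rep_fa (- x) = (\<lambda>u. - Rep_fa x u)"
  "Rep_fa (x * y) = fa_mult (Rep_fa x) (Rep_fa y)"
  by (simp_all add: zero_fa_def one_fa_def plus_fa_def minus_fa_def uminus_fa_def times_fa_def
      Abs_fa_inverse fa_add_def fa_sub_def)

lemma fa_eqI: "(\<And>u. Rep_fa x u = Rep_fa y u) \<Longrightarrow> x = y"
  by (metis Rep_fa_inject ext)

lemma fa_mult_assoc: "fa_mult (fa_mult f1 f2) f3 = fa_mult f1 (fa_mult f2 f3)"
proof (rule ext)
  fix u
  have "fa_mult (fa_mult f1 f2) f3 u =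
     (\<Sum>p\<in>{(x, y). x @ y = u}. \<Sum>r\<in>{(x, y). x @ y = fst p}. f1 (fst r) * f2 (snd r) * f3 (snd p))"
    unfolding fa_mult_def by (simp add: case_prod_beta sum_distrib_right)
  also have "\<dots> = (\<Sum>(p,r)\<in>Sigma {(x, y). x @ y = u} (\<lambda>p. {(x, y). x @ y = fst p}). f1 (fst r) * f2 (snd r) * f3 (snd p))"
    by (rule sum.Sigma) (auto intro: finite_split)
  also have "\<dots> = (\<Sum>(p,r)\<in>Sigma {(x, y). x @ y = u} (\<lambda>p. {(x, y). x @ y = snd p}). f1 (fst p) * f2 (fst r) * f3 (snd r))"
    by (rule sum.reindex_bij_witness[where i = "\<lambda>((x,w),(y,z)). ((x@y, z),(x,y))"
                                      and j = "\<lambda>((m,z),(x,y)). ((x, y@z),(y,z))"]) auto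
  also have "\<dots> = (\<Sum>p\<in>{(x, y). x @ y = u}. \<Sum>r\<in>{(x, y). x @ y = snd p}. f1 (fst p) * f2 (fst r) * f3 (snd r))"
    by (rule sum.Sigma[symmetric]) (auto intro: finite_split)
  also have "\<dots> = fa_mult f1 (fa_mult f2 f3) u"
    unfolding fa_mult_def by (simp add: case_prod_beta sum_distrib_left mult.assoc)
  finally show "fa_mult (fa_mult f1 f2) f3 u = fa_mult f1 (fa_mult f2 f3) u" .
qed

lemma fa_mult_idx: "fa_mult f1 f2 u = (\<Sum>i\<le>length u. f1 (take i u) * f2 (drop i u))"
proof -
  have "inj_on (\<lambda>i. (take i u, drop i u)) {..length u}"
    by (auto simp: inj_on_def) (metis length_take min.absorb2)
  then show ?thesis unfolding fa_mult_def split_set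
    by (subst sum.reindex) (auto simp: case_prod_beta)
qed

lemma fa_mult_mono_left:
  "fa_mult (fa_mono w) f u = (if take (length w) u = w then f (drop (length w) u) else 0)"
proof -
  have "fa_mult (fa_mono w) f u = (\<Sum>i\<le>length u. if i = length w \<and> take (length w) u = w then f (drop i u) else 0)"
    unfolding fa_mult_idx fa_mono_def
    by (intro sum.cong refl) (auto simp: min_def split: if_splits)
  also have "\<dots> = (if take (length w) u = w then f (drop (length w) u) else 0)"
  proof (cases "take (length w) u = w")
    case True
    then have "length (take (length w) u) = length w" by simp
    then have "length w \<le> length u" by simp
    then show ?thesis using True by (simp add: sum.delta)
  qed simp
  finally show ?thesis .
qed

lemma fa_mult_mono_right:
  "fa_mult f (fa_mono w) u = (if length w \<le> length u \<and> drop (length u - length w) u = w then f (take (length u - length w) u) else 0)"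
proof -
  have "fa_mult f (fa_mono w) u = (\<Sum>i\<le>length u. if i = length u - length w \<and> length w \<le> length u \<and> drop (length u - length w) u = w then f (take i u) else 0)"
    unfolding fa_mult_idx fa_mono_def
    by (intro sum.cong refl) auto
  also have "\<dots> = (if length w \<le> length u \<and> drop (length u - length w) u = w then f (take (length u - length w) u) else 0)"
    by (cases "length w \<le> length u \<and> drop (length u - length w) u = w") (auto simp add: sum.delta intro!: sum.neutral)
  finally show ?thesis .
qed

lemma fa_mono_mult: "fa_mult (fa_mono u) (fa_mono w) = fa_mono (u @ w)"
  by (rule ext) (simp add: fa_mult_mono_left, auto simp: fa_mono_def append_eq_conv_conj, metis append_take_drop_id)

lemma fa_mult_distrib_left: "fa_mult f1 (\<lambda>u. f2 u + f3 u) = (\<lambda>u. fa_mult f1 f2 u + fa_mult f1 f3 u)"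
  by (rule ext) (simp add: fa_mult_idx distrib_left sum.distrib)
lemma fa_mult_distrib_right: "fa_mult (\<lambda>u. f2 u + f3 u) f1 = (\<lambda>u. fa_mult f2 f1 u + fa_mult f3 f1 u)"
  by (rule ext) (simp add: fa_mult_idx distrib_right sum.distrib)

instance
proof
  fix a b c :: "'a fa"
  show "a * b * c = a * (b * c)" by (rule fa_eqI) (simp add: Rep_fa_ops fa_mult_assoc)
  show "1 * a = a" by (rule fa_eqI) (simp add: Rep_fa_ops fa_one_def fa_mult_mono_left)
  show "a * 1 = a" by (rule fa_eqI) (simp add: Rep_fa_ops fa_one_def fa_mult_mono_right)
  show "(a + b) * c = a * c + b * c" by (rule fa_eqI) (simp add: Rep_fa_ops fa_mult_distrib_right)
  show "a * (b + c) = a * b + a * c" by (rule fa_eqI) (simp add: Rep_fa_ops fa_mult_distrib_left)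
  show "a + b + c = a + (b + c)" by (rule fa_eqI) (simp add: Rep_fa_ops)
  show "a + b = b + a" by (rule fa_eqI) (simp add: Rep_fa_ops)
  show "0 + a = a" by (rule fa_eqI) (simp add: Rep_fa_ops)
  show "- a + a = 0" by (rule fa_eqI) (simp add: Rep_fa_ops)
  show "a - b = a + - b" by (rule fa_eqI) (simp add: Rep_fa_ops)
  show "(0::'a fa) \<noteq> 1"
  proof
    assume "(0::'a fa) = 1"
    then have "Rep_fa (0::'a fa) [] = Rep_fa 1 []" by simp
    then show False by (simp add: Rep_fa_ops fa_one_def fa_mono_def)
  qed
qed
end


definition M :: "cgen list \<Rightarrow> 'k::field fa" where "M w = Abs_fa (fa_mono w)"
definition smul :: "'k::field \<Rightarrow> 'k fa \<Rightarrow> 'k fa" where "smul c x = Abs_fa (fa_smult c (Rep_fa x))"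

lemma Rep_fa_M: "Rep_fa (M w) = fa_mono w" by (simp add: M_def Abs_fa_inverse)
lemma Rep_fa_smul: "Rep_fa (smul c x) = (\<lambda>u. c * Rep_fa x u)" by (simp add: smul_def Abs_fa_inverse fa_smult_def)

lemma Abs_fa_ops:
  "Abs_fa (fa_mult f1 f2) = Abs_fa f1 * Abs_fa f2"
  "Abs_fa (fa_add f1 f2) = Abs_fa f1 + Abs_fa f2"
  "Abs_fa (fa_sub f1 f2) = Abs_fa f1 - Abs_fa f2"
  "Abs_fa (fa_smult c f1) = smul c (Abs_fa f1)"
  "Abs_fa fa_one = 1"
  "Abs_fa (fa_mono w) = M w"
  "Abs_fa (g x) = M [x]"
  by (simp_all add: times_fa_def plus_fa_def minus_fa_def one_fa_def smul_def M_def g_def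
      Abs_fa_inverse fa_add_def fa_sub_def)

lemma Abs_fa_pow: "Abs_fa (fa_pow f m) = (Abs_fa f) ^ m"
  by (induction m) (simp_all add: Abs_fa_ops)

lemma M_append: "M (u @ w) = M u * M w"
  by (simp add: M_def times_fa_def Abs_fa_inverse fa_mono_mult)
lemma M_Nil: "M [] = 1"
  by (simp add: M_def one_fa_def fa_one_def)
lemma M_Cons: "M (x # w) = M [x] * M w"
  using M_append[of "[x]" w] by simp
lemma M_replicate: "M (replicate m x) = M [x] ^ m"
  by (induction m) (simp_all add: M_Nil, metis M_Cons)

lemma fa_mult_smult_left: "fa_mult (\<lambda>u. c * f1 u) f2 = (\<lambda>u. c * fa_mult f1 f2 u)"
  by (rule ext) (simp add: fa_mult_idx sum_distrib_left mult.assoc)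
lemma fa_mult_smult_right: "fa_mult f1 (\<lambda>u. c * f2 u) = (\<lambda>u. c * fa_mult f1 f2 u)"
  by (rule ext) (simp add: fa_mult_idx sum_distrib_left mult.left_commute)

lemma smul_mult_left[simp]: "smul c x * y = smul c (x * y)"
  by (rule fa_eqI) (simp add: Rep_fa_ops Rep_fa_smul fa_mult_smult_left)
lemma smul_mult_right[simp]: "x * smul c y = smul c (x * y)"
  by (rule fa_eqI) (simp add: Rep_fa_ops Rep_fa_smul fa_mult_smult_right)
lemma smul_smul[simp]: "smul c (smul d x) = smul (c * d) x"
  by (rule fa_eqI) (simp add: Rep_fa_smul mult.assoc)
lemma smul_add_right: "smul c (x + y) = smul c x + smul c y"
  by (rule fa_eqI) (simp add: Rep_fa_ops Rep_fa_smul distrib_left)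
lemma smul_diff_right: "smul c (x - y) = smul c x - smul c y"
  by (rule fa_eqI) (simp add: Rep_fa_ops Rep_fa_smul right_diff_distrib)
lemma smul_add_left: "smul (c + d) x = smul c x + smul d x"
  by (rule fa_eqI) (simp add: Rep_fa_ops Rep_fa_smul distrib_right)
lemma smul_diff_left: "smul (c - d) x = smul c x - smul d x"
  by (rule fa_eqI) (simp add: Rep_fa_ops Rep_fa_smul left_diff_distrib)
lemma smul_minus_right[simp]: "smul c (- x) = - smul c x"
  by (rule fa_eqI) (simp add: Rep_fa_ops Rep_fa_smul)
lemma smul_one[simp]: "smul 1 x = x"
  by (rule fa_eqI) (simp add: Rep_fa_smul)
lemma smul_zero_left[simp]: "smul 0 x = 0"
  by (rule fa_eqI) (simp add: Rep_fa_smul Rep_fa_ops)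
lemma smul_zero_right[simp]: "smul c 0 = 0"
  by (rule fa_eqI) (simp add: Rep_fa_smul Rep_fa_ops)
lemma smul_neg_left: "smul (- c) x = - smul c x"
  by (rule fa_eqI) (simp add: Rep_fa_smul Rep_fa_ops)
lemma smul_sum: "smul c (\<Sum>i\<in>A. f i) = (\<Sum>i\<in>A. smul c (f i))"
  by (induction A rule: infinite_finite_induct) (simp_all add: smul_add_right)
lemma Rep_fa_sum: "Rep_fa (\<Sum>i\<in>A. f i) = (\<lambda>u. \<Sum>i\<in>A. Rep_fa (f i) u)"
  by (induction A rule: infinite_finite_induct) (simp_all add: Rep_fa_ops)

lemmas smul_simps = smul_add_right smul_diff_right smul_add_left smul_diff_left


locale clq =
  fixes n k :: nat and q :: "'k::field"
  assumes two: "(2::'k) \<noteq> 0" and qnz: "q \<noteq> 0" and kpos: "0 < k"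
begin

abbreviation "L \<equiv> cl_letters n"

definition inI :: "'k fa \<Rightarrow> bool" where "inI x \<longleftrightarrow> Rep_fa x \<in> cl_ideal n k q"

definition cng :: "'k fa \<Rightarrow> 'k fa \<Rightarrow> bool" (infix "\<approx>" 50) where "x \<approx> y \<longleftrightarrow> inI (x - y)"

lemma inI_zero: "inI 0"
  unfolding inI_def cl_ideal_def Rep_fa_ops by (rule two_sided_ideal.zero)
lemma inI_add: "inI x \<Longrightarrow> inI y \<Longrightarrow> inI (x + y)"
  unfolding inI_def cl_ideal_def
  by (drule (1) two_sided_ideal.add) (simp add: fa_add_def Rep_fa_ops)
lemma inI_smul: "inI x \<Longrightarrow> inI (smul c x)"
  unfolding inI_def cl_ideal_def
  by (drule two_sided_ideal.smult[where c = c]) (simp add: fa_smult_def Rep_fa_smul)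
lemma inI_neg: "inI x \<Longrightarrow> inI (- x)"
  by (drule inI_smul[of x "-1"]) (simp add: smul_neg_left)
lemma inI_diff: "inI x \<Longrightarrow> inI y \<Longrightarrow> inI (x - y)"
  unfolding diff_conv_add_uminus by (intro inI_add inI_neg)
lemma inI_MM: "inI x \<Longrightarrow> set u \<subseteq> L \<Longrightarrow> set w \<subseteq> L \<Longrightarrow> inI (M u * x * M w)"
  unfolding inI_def cl_ideal_def Rep_fa_ops Rep_fa_M
  by (rule two_sided_ideal.mult)
lemma inI_gen: "r \<in> cl_relations n k q \<Longrightarrow> inI (Abs_fa r)"
  unfolding inI_def cl_ideal_def by (simp add: Abs_fa_inverse two_sided_ideal.gen)
lemma inI_sum: "(\<And>i. i \<in> A \<Longrightarrow> inI (f i)) \<Longrightarrow> inI (\<Sum>i\<in>A. f i)"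
  by (induction A rule: infinite_finite_induct) (simp_all add: inI_zero inI_add)

inductive_set Alg :: "'k fa set" where
  Alg_M: "set w \<subseteq> L \<Longrightarrow> M w \<in> Alg"
| Alg_add: "a \<in> Alg \<Longrightarrow> b \<in> Alg \<Longrightarrow> a + b \<in> Alg"
| Alg_smul: "a \<in> Alg \<Longrightarrow> smul c a \<in> Alg"
| Alg_mult: "a \<in> Alg \<Longrightarrow> b \<in> Alg \<Longrightarrow> a * b \<in> Alg"

lemma Alg_one: "1 \<in> Alg" using Alg_M[of "[]"] by (simp add: M_Nil)
lemma Alg_pow: "a \<in> Alg \<Longrightarrow> a ^ m \<in> Alg"
  by (induction m) (simp_all add: Alg_one Alg_mult)
lemma Alg_diff: assumes "a \<in> Alg" "b \<in> Alg" shows "a - b \<in> Alg"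
proof -
  have "a - b = a + smul (-1) b" by (simp add: smul_neg_left)
  then show ?thesis by (metis Alg_add Alg_smul assms)
qed

lemma inI_mult_left: "a \<in> Alg \<Longrightarrow> inI y \<Longrightarrow> inI (a * y)"
proof (induction a arbitrary: y rule: Alg.induct)
  case (Alg_M w)
  then show ?case using inI_MM[of y w "[]"] by (simp add: M_Nil)
next
  case (Alg_add a b) then show ?case by (simp add: distrib_right inI_add)
next
  case (Alg_smul a c) then show ?case by (simp add: inI_smul)
next
  case (Alg_mult a b) then show ?case by (simp add: mult.assoc)
qed

lemma inI_mult_right: "a \<in> Alg \<Longrightarrow> inI y \<Longrightarrow> inI (y * a)"
proof (induction a arbitrary: y rule: Alg.induct)
  case (Alg_M w)
  then show ?case using inI_MM[of y "[]" w] by (simp add: M_Nil)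
next
  case (Alg_add a b) then show ?case by (simp add: distrib_left inI_add)
next
  case (Alg_smul a c) then show ?case by (simp add: inI_smul)
next
  case (Alg_mult a b) then show ?case by (simp flip: mult.assoc)
qed

lemma cng_refl[intro]: "x \<approx> x" by (simp add: cng_def inI_zero)
lemma cng_eq: "x = y \<Longrightarrow> x \<approx> y" by (simp add: cng_def inI_zero)
lemma cng_sym: "x \<approx> y \<Longrightarrow> y \<approx> x"
  unfolding cng_def using inI_neg by fastforce
lemma cng_trans[trans]: "x \<approx> y \<Longrightarrow> y \<approx> z \<Longrightarrow> x \<approx> z"
  unfolding cng_def using inI_add by fastforce
lemma cng_add: "x \<approx> y \<Longrightarrow> x' \<approx> y' \<Longrightarrow> x + x' \<approx> y + y'"
  unfolding cng_def using inI_add by (fastforce simp: algebra_simps)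
lemma cng_diff: "x \<approx> y \<Longrightarrow> x' \<approx> y' \<Longrightarrow> x - x' \<approx> y - y'"
  unfolding cng_def using inI_diff by (fastforce simp: algebra_simps)
lemma cng_smul: "x \<approx> y \<Longrightarrow> smul c x \<approx> smul c y"
  unfolding cng_def using inI_smul by (fastforce simp: smul_diff_right)
lemma cng_left: "a \<in> Alg \<Longrightarrow> x \<approx> y \<Longrightarrow> a * x \<approx> a * y"
  unfolding cng_def using inI_mult_left by (fastforce simp: right_diff_distrib)
lemma cng_right: "a \<in> Alg \<Longrightarrow> x \<approx> y \<Longrightarrow> x * a \<approx> y * a"
  unfolding cng_def using inI_mult_right by (fastforce simp: left_diff_distrib)
lemma cng_zero_iff: "x \<approx> y \<longleftrightarrow> x - y \<approx> 0"
  by (simp add: cng_def)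
lemma cng_sum: "(\<And>i. i \<in> A \<Longrightarrow> f i \<approx> f' i) \<Longrightarrow> (\<Sum>i\<in>A. f i) \<approx> (\<Sum>i\<in>A. f' i)"
proof (induction A rule: infinite_finite_induct)
  case (insert x F)
  then show ?case by (simp add: cng_add)
qed auto

lemma cng_gen: "r \<in> cl_relations n k q \<Longrightarrow> Abs_fa r \<approx> 0"
  by (simp add: cng_def inI_gen)

end

definition Pp :: "nat \<Rightarrow> 'k::field fa" where "Pp a = M [Psi a]"
definition Ss :: "nat \<Rightarrow> 'k::field fa" where "Ss a = M [PsiS a]"
definition Ww :: "nat \<Rightarrow> 'k::field fa" where "Ww a = M [Om a]"
definition Vv :: "nat \<Rightarrow> 'k::field fa" where "Vv a = M [OmInv a]"

lemma smul_half: "(2::'k::field) \<noteq> 0 \<Longrightarrow> smul (inverse 2) (x + x) = (x :: 'k fa)"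
proof -
  assume h: "(2::'k) \<noteq> 0"
  have "smul (inverse 2) (x + x) = smul (inverse 2 + inverse 2) x"
    by (simp only: smul_add_right smul_add_left)
  also have "inverse 2 + inverse (2::'k) = 1" using h by (simp add: field_simps)
  finally show ?thesis by simp
qed

context clq
begin

lemma letters: "a \<in> {1..n} \<Longrightarrow> Psi a \<in> L \<and> PsiS a \<in> L \<and> Om a \<in> L \<and> OmInv a \<in> L"
  by (auto simp: cl_letters_def)

lemma Alg_gens:
  assumes "a \<in> {1..n}"
  shows "Pp a \<in> Alg" "Ss a \<in> Alg" "Ww a \<in> Alg" "Vv a \<in> Alg"
  using letters[OF assms] by (auto simp: Pp_def Ss_def Ww_def Vv_def intro!: Alg_M)

lemma rel_mem:
  assumes "a \<in> {1..n}" "b \<in> {1..n}"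
  shows "fa_sub (fa_mult (g (Om a)) (g (Om b))) (fa_mult (g (Om b)) (g (Om a))) \<in> cl_relations n k q"
    "fa_sub (fa_mult (g (Om a)) (g (OmInv a))) fa_one \<in> cl_relations n k q"
    "fa_sub (fa_mult (g (OmInv a)) (g (Om a))) fa_one \<in> cl_relations n k q"
    "fa_sub (fa_mult (g (Om a)) (g (Psi b)))
             (fa_smult (if a = b then q else 1) (fa_mult (g (Psi b)) (g (Om a)))) \<in> cl_relations n k q"
    "fa_sub (fa_mult (g (Om a)) (g (PsiS b)))
             (fa_smult (if a = b then inverse q else 1) (fa_mult (g (PsiS b)) (g (Om a)))) \<in> cl_relations n k q"
    "fa_add (fa_mult (g (Psi a)) (g (Psi b))) (fa_mult (g (Psi b)) (g (Psi a))) \<in> cl_relations n k q"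
    "fa_add (fa_mult (g (PsiS a)) (g (PsiS b))) (fa_mult (g (PsiS b)) (g (PsiS a))) \<in> cl_relations n k q"
    "fa_sub (fa_add (fa_mult (g (Psi a)) (g (PsiS a)))
                     (fa_smult (q ^ k) (fa_mult (g (PsiS a)) (g (Psi a)))))
             (fa_pow (g (OmInv a)) k) \<in> cl_relations n k q"
    "fa_sub (fa_add (fa_mult (g (Psi a)) (g (PsiS a)))
                     (fa_smult (inverse (q ^ k)) (fa_mult (g (PsiS a)) (g (Psi a)))))
             (fa_pow (g (Om a)) k) \<in> cl_relations n k q"
    "a \<noteq> b \<Longrightarrow> fa_add (fa_mult (g (Psi a)) (g (PsiS b))) (fa_mult (g (PsiS b)) (g (Psi a))) \<in> cl_relations n k q"
  unfolding cl_relations_def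
  by (rule UN_I[OF assms(1)], rule UN_I[OF assms(2)], simp)+

lemma cng_of_zero: "x - y \<approx> 0 \<Longrightarrow> x \<approx> y"
  by (simp add: cng_def)
lemma cng_of_zero': "x + y \<approx> 0 \<Longrightarrow> x \<approx> - y"
  by (simp add: cng_def)

lemma rels:
  assumes a: "a \<in> {1..n}" and b: "b \<in> {1..n}"
  shows rel_WW: "Ww a * Ww b \<approx> Ww b * Ww a"
    and rel_WV: "Ww a * Vv a \<approx> 1"
    and rel_VW: "Vv a * Ww a \<approx> 1"
    and rel_WP: "Ww a * Pp b \<approx> smul (if a = b then q else 1) (Pp b * Ww a)"
    and rel_WS: "Ww a * Ss b \<approx> smul (if a = b then inverse q else 1) (Ss b * Ww a)"
    and rel_PP: "Pp a * Pp b \<approx> - (Pp b * Pp a)"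
    and rel_SS: "Ss a * Ss b \<approx> - (Ss b * Ss a)"
    and rel_PS1: "Pp a * Ss a + smul (q ^ k) (Ss a * Pp a) \<approx> Vv a ^ k"
    and rel_PS2: "Pp a * Ss a + smul (inverse (q ^ k)) (Ss a * Pp a) \<approx> Ww a ^ k"
  using cng_gen[OF rel_mem(1)[OF a b]] cng_gen[OF rel_mem(2)[OF a b]] cng_gen[OF rel_mem(3)[OF a b]]
    cng_gen[OF rel_mem(4)[OF a b]] cng_gen[OF rel_mem(5)[OF a b]] cng_gen[OF rel_mem(6)[OF a b]]
    cng_gen[OF rel_mem(7)[OF a b]] cng_gen[OF rel_mem(8)[OF a b]] cng_gen[OF rel_mem(9)[OF a b]]
  by (simp_all add: Abs_fa_ops Abs_fa_pow Pp_def Ss_def Ww_def Vv_def cng_of_zero cng_of_zero' M_replicate)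

lemma rel_PSab:
  assumes a: "a \<in> {1..n}" and b: "b \<in> {1..n}" and ab: "a \<noteq> b"
  shows "Pp a * Ss b \<approx> - (Ss b * Pp a)"
  using cng_gen[OF rel_mem(10)[OF a b ab]]
  by (simp add: Abs_fa_ops Pp_def Ss_def cng_of_zero')

end

context clq
begin

lemma cng_rearr: "X \<approx> Y \<Longrightarrow> Z - Z' = X - Y \<Longrightarrow> Z \<approx> Z'"
  by (simp add: cng_def)

lemma cng_double_zero: "x \<approx> - x \<Longrightarrow> x \<approx> 0"
proof -
  assume h: "x \<approx> - x"
  have "x + x \<approx> - x + x" by (rule cng_add[OF h cng_refl])
  then have "smul (inverse 2) (x + x) \<approx> smul (inverse 2) (- x + x)" by (rule cng_smul)
  then show ?thesis using smul_half[OF two, of x] by simp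
qed

lemma pow2k: "(x::'a::monoid_mult) ^ (2 * k) = x ^ k * x ^ k" by (simp add: mult_2 power_add)
declare cng_refl[simp]
lemma qk_nz: "q ^ k \<noteq> 0" using qnz by simp
lemma qk_inv: "q ^ k * inverse (q ^ k) = 1" "inverse (q ^ k) * q ^ k = 1" using qk_nz by simp_all

context
  fixes a assumes a: "a \<in> {1..n}"
begin

lemmas AG = Alg_gens[OF a]

lemma D_PP: "Pp a * Pp a \<approx> 0" by (rule cng_double_zero[OF rel_PP[OF a a]])
lemma D_SS: "Ss a * Ss a \<approx> 0" by (rule cng_double_zero[OF rel_SS[OF a a]])

lemma D_WjP: "Ww a ^ j * Pp a \<approx> smul (q ^ j) (Pp a * Ww a ^ j)"
proof (induction j)
  case 0 then show ?case by simp
next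
  case (Suc j)
  have "Ww a ^ Suc j * Pp a = Ww a * (Ww a ^ j * Pp a)" by (simp add: mult.assoc)
  also have "\<dots> \<approx> Ww a * smul (q ^ j) (Pp a * Ww a ^ j)" by (rule cng_left[OF AG(3) Suc])
  also have "\<dots> = smul (q ^ j) ((Ww a * Pp a) * Ww a ^ j)" by (simp add: mult.assoc)
  also have "\<dots> \<approx> smul (q ^ j) (smul q (Pp a * Ww a) * Ww a ^ j)"
    using rel_WP[OF a a] by (intro cng_smul cng_right Alg_pow AG) simp
  also have "\<dots> = smul (q ^ Suc j) (Pp a * Ww a ^ Suc j)" by (simp add: mult.assoc mult.commute)
  finally show ?case .
qed

lemma D_WjS: "Ww a ^ j * Ss a \<approx> smul (inverse q ^ j) (Ss a * Ww a ^ j)"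
proof (induction j)
  case 0 then show ?case by simp
next
  case (Suc j)
  have "Ww a ^ Suc j * Ss a = Ww a * (Ww a ^ j * Ss a)" by (simp add: mult.assoc)
  also have "\<dots> \<approx> Ww a * smul (inverse q ^ j) (Ss a * Ww a ^ j)" by (rule cng_left[OF AG(3) Suc])
  also have "\<dots> = smul (inverse q ^ j) ((Ww a * Ss a) * Ww a ^ j)" by (simp add: mult.assoc)
  also have "\<dots> \<approx> smul (inverse q ^ j) (smul (inverse q) (Ss a * Ww a) * Ww a ^ j)"
    using rel_WS[OF a a] by (intro cng_smul cng_right Alg_pow AG) simp
  also have "\<dots> = smul (inverse q ^ Suc j) (Ss a * Ww a ^ Suc j)" by (simp add: mult.assoc mult.commute)
  finally show ?case .
qed

lemma D_WVj: "Ww a ^ j * Vv a ^ j \<approx> 1"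
proof (induction j)
  case 0 then show ?case by simp
next
  case (Suc j)
  have "Ww a ^ Suc j * Vv a ^ Suc j = Ww a ^ j * ((Ww a * Vv a) * Vv a ^ j)"
    by (simp only: power_Suc2[of "Ww a" j] power_Suc[of "Vv a" j] mult.assoc)
  also have "\<dots> \<approx> Ww a ^ j * (1 * Vv a ^ j)"
    by (intro cng_left cng_right Alg_pow AG rel_WV[OF a a])
  also have "\<dots> \<approx> 1" using Suc by simp
  finally show ?case .
qed

lemma D_SP: "Ss a * Pp a \<approx> smul (q ^ k) (Ww a ^ k - Pp a * Ss a)"
proof -
  have "(Pp a * Ss a + smul (inverse (q ^ k)) (Ss a * Pp a)) - Pp a * Ss a \<approx> Ww a ^ k - Pp a * Ss a"
    by (rule cng_diff[OF rel_PS2[OF a a] cng_refl])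
  then have "smul (q ^ k) (smul (inverse (q ^ k)) (Ss a * Pp a)) \<approx> smul (q ^ k) (Ww a ^ k - Pp a * Ss a)"
    by (intro cng_smul) simp
  then show ?thesis by (simp add: qk_inv)
qed

lemma D_WkPS: "Ww a ^ k * (Pp a * Ss a) \<approx> Pp a * Ss a * Ww a ^ k"
proof -
  have "Ww a ^ k * (Pp a * Ss a) = (Ww a ^ k * Pp a) * Ss a" by (simp add: mult.assoc)
  also have "\<dots> \<approx> smul (q ^ k) (Pp a * Ww a ^ k) * Ss a" by (intro cng_right AG D_WjP)
  also have "\<dots> = smul (q ^ k) (Pp a * (Ww a ^ k * Ss a))" by (simp add: mult.assoc)
  also have "\<dots> \<approx> smul (q ^ k) (Pp a * smul (inverse q ^ k) (Ss a * Ww a ^ k))"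
    by (intro cng_smul cng_left AG D_WjS)
  also have "\<dots> = Pp a * Ss a * Ww a ^ k" by (simp add: mult.assoc power_inverse qk_inv)
  finally show ?thesis .
qed

lemma D_WkSP: "Ww a ^ k * (Ss a * Pp a) \<approx> Ss a * Pp a * Ww a ^ k"
proof -
  have "Ww a ^ k * (Ss a * Pp a) = (Ww a ^ k * Ss a) * Pp a" by (simp add: mult.assoc)
  also have "\<dots> \<approx> smul (inverse q ^ k) (Ss a * Ww a ^ k) * Pp a" by (intro cng_right AG D_WjS)
  also have "\<dots> = smul (inverse q ^ k) (Ss a * (Ww a ^ k * Pp a))" by (simp add: mult.assoc)
  also have "\<dots> \<approx> smul (inverse q ^ k) (Ss a * smul (q ^ k) (Pp a * Ww a ^ k))"
    by (intro cng_smul cng_left AG D_WjP)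
  also have "\<dots> = Ss a * Pp a * Ww a ^ k" by (simp add: mult.assoc power_inverse qk_inv)
  finally show ?thesis .
qed

lemma D_W2k: "smul (q ^ (2 * k)) (Ww a ^ (2 * k)) \<approx> 1 + smul (q ^ (2 * k) - 1) (Pp a * Ss a * Ww a ^ k)"
proof -
  have "Ww a ^ k * (Pp a * Ss a + smul (q ^ k) (Ss a * Pp a)) \<approx> Ww a ^ k * Vv a ^ k"
    by (intro cng_left Alg_pow AG rel_PS1[OF a a])
  also have "\<dots> \<approx> 1" by (rule D_WVj)
  finally have 1: "Ww a ^ k * (Pp a * Ss a + smul (q ^ k) (Ss a * Pp a)) \<approx> 1" .
  have "Ww a ^ k * (Pp a * Ss a + smul (q ^ k) (Ss a * Pp a))
      = Ww a ^ k * (Pp a * Ss a) + smul (q ^ k) (Ww a ^ k * (Ss a * Pp a))"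
    by (simp add: distrib_left)
  also have "\<dots> \<approx> Pp a * Ss a * Ww a ^ k + smul (q ^ k) (Ss a * Pp a * Ww a ^ k)"
    by (intro cng_add cng_smul D_WkPS D_WkSP)
  also have "\<dots> \<approx> Pp a * Ss a * Ww a ^ k + smul (q ^ k) (smul (q ^ k) (Ww a ^ k - Pp a * Ss a) * Ww a ^ k)"
    by (intro cng_add cng_smul cng_refl cng_right Alg_pow AG D_SP)
  finally have 2: "Ww a ^ k * (Pp a * Ss a + smul (q ^ k) (Ss a * Pp a)) \<approx>
     Pp a * Ss a * Ww a ^ k + smul (q ^ k) (smul (q ^ k) (Ww a ^ k - Pp a * Ss a) * Ww a ^ k)" .
  have 3: "Pp a * Ss a * Ww a ^ k + smul (q ^ k) (smul (q ^ k) (Ww a ^ k - Pp a * Ss a) * Ww a ^ k) \<approx> 1"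
    using cng_trans[OF cng_sym[OF 2] 1] .
  show ?thesis
    by (rule cng_rearr[OF 3]) (simp only: pow2k, simp add: algebra_simps smul_simps)
qed

end
end

definition cw :: "nat \<Rightarrow> nat \<Rightarrow> nat \<Rightarrow> nat \<Rightarrow> cgen list" where
  "cw a p d v = replicate p (Psi a) @ replicate d (PsiS a) @ replicate v (Om a)"

lemma M_cw: "M (cw a p d v) = Pp a ^ p * Ss a ^ d * Ww a ^ v"
  by (simp add: cw_def M_append M_replicate Pp_def Ss_def Ww_def mult.assoc)

context clq
begin

definition span :: "cgen list set \<Rightarrow> 'k fa set" where
  "span G = {x. \<exists>S c. finite S \<and> S \<subseteq> G \<and> x \<approx> (\<Sum>w\<in>S. smul (c w) (M w))}"

lemma spanI: "finite S \<Longrightarrow> S \<subseteq> G \<Longrightarrow> x \<approx> (\<Sum>w\<in>S. smul (c w) (M w)) \<Longrightarrow> x \<in> span G"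
  unfolding span_def by blast

lemma spanE: "x \<in> span G \<Longrightarrow> (\<And>S c. finite S \<Longrightarrow> S \<subseteq> G \<Longrightarrow> x \<approx> (\<Sum>w\<in>S. smul (c w) (M w)) \<Longrightarrow> P) \<Longrightarrow> P"
  unfolding span_def by blast

lemma span_M: "w \<in> G \<Longrightarrow> M w \<in> span G"
  by (rule spanI[of "{w}" _ _ "\<lambda>_. 1"]) simp_all

lemma span_0: "0 \<in> span G"
  by (rule spanI[of "{}"]) simp_all

lemma span_cng: "x \<approx> y \<Longrightarrow> y \<in> span G \<Longrightarrow> x \<in> span G"
  by (erule spanE, rule spanI, assumption+, erule (1) cng_trans)

lemma sum_extend:
  assumes "finite T" "S \<subseteq> T"
  shows "(\<Sum>w\<in>T. smul (if w \<in> S then c w else 0) (M w)) = (\<Sum>w\<in>S. smul (c w) (M w))"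
proof -
  have "(\<Sum>w\<in>T. smul (if w \<in> S then c w else 0) (M w)) = (\<Sum>w\<in>S. smul (if w \<in> S then c w else 0) (M w))"
    by (rule sum.mono_neutral_right[OF assms]) auto
  also have "\<dots> = (\<Sum>w\<in>S. smul (c w) (M w))" by (rule sum.cong) auto
  finally show ?thesis .
qed

lemma span_add: "x \<in> span G \<Longrightarrow> y \<in> span G \<Longrightarrow> x + y \<in> span G"
proof -
  assume hx: "x \<in> span G" and hy: "y \<in> span G"
  from hx obtain S1 c1 where h1: "finite S1" "S1 \<subseteq> G" "x \<approx> (\<Sum>w\<in>S1. smul (c1 w) (M w))"
    by (rule spanE)
  from hy obtain S2 c2 where h2: "finite S2" "S2 \<subseteq> G" "y \<approx> (\<Sum>w\<in>S2. smul (c2 w) (M w))"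
    by (rule spanE)
  note h = h1 h2
  let ?c = "\<lambda>w. (if w \<in> S1 then c1 w else 0) + (if w \<in> S2 then c2 w else 0)"
  have "x + y \<approx> (\<Sum>w\<in>S1. smul (c1 w) (M w)) + (\<Sum>w\<in>S2. smul (c2 w) (M w))"
    using h by (intro cng_add)
  also have "\<dots> = (\<Sum>w\<in>S1 \<union> S2. smul (?c w) (M w))"
    using h by (simp add: smul_add_left sum.distrib sum_extend)
  finally show ?thesis using h by (intro spanI[of "S1 \<union> S2"]) auto
qed

lemma span_smul: "x \<in> span G \<Longrightarrow> smul c x \<in> span G"
proof -
  assume "x \<in> span G"
  then obtain S c1 where h: "finite S" "S \<subseteq> G" "x \<approx> (\<Sum>w\<in>S. smul (c1 w) (M w))"
    by (rule spanE)
  have "smul c x \<approx> smul c (\<Sum>w\<in>S. smul (c1 w) (M w))" using h by (intro cng_smul)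
  also have "\<dots> = (\<Sum>w\<in>S. smul (c * c1 w) (M w))" by (simp add: smul_sum)
  finally show ?thesis using h by (intro spanI[of S]) auto
qed

lemma span_neg: "x \<in> span G \<Longrightarrow> - x \<in> span G"
  using span_smul[of x G "-1"] by (simp add: smul_neg_left)

lemma span_diff: "x \<in> span G \<Longrightarrow> y \<in> span G \<Longrightarrow> x - y \<in> span G"
  unfolding diff_conv_add_uminus by (intro span_add span_neg)

lemma span_sum: "(\<And>i. i \<in> A \<Longrightarrow> f i \<in> span G) \<Longrightarrow> (\<Sum>i\<in>A. f i) \<in> span G"
  by (induction A rule: infinite_finite_induct) (simp_all add: span_0 span_add)

lemma Alg_sum: "(\<And>i. i \<in> A \<Longrightarrow> f i \<in> Alg) \<Longrightarrow> (\<Sum>i\<in>A. f i) \<in> Alg"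
proof (induction A rule: infinite_finite_induct)
  case (infinite A) then show ?case using Alg_M[of "[]"] Alg_smul[of "M []" 0] by simp
next
  case empty then show ?case using Alg_M[of "[]"] Alg_smul[of "M []" 0] by simp
next
  case (insert x F) then show ?case by (simp add: Alg_add)
qed

lemma span_map:
  assumes x: "x \<in> span G1" and G: "\<And>w. w \<in> G1 \<Longrightarrow> u @ w @ v \<in> G2"
    and u: "set u \<subseteq> L" and v: "set v \<subseteq> L"
  shows "M u * x * M v \<in> span G2"
proof -
  obtain S c where h: "finite S" "S \<subseteq> G1" "x \<approx> (\<Sum>w\<in>S. smul (c w) (M w))"
    using x by (rule spanE)
  have "M u * x * M v \<approx> M u * (\<Sum>w\<in>S. smul (c w) (M w)) * M v"
    using h u v by (intro cng_right cng_left Alg_M)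
  also have "\<dots> = (\<Sum>w\<in>S. smul (c w) (M (u @ w @ v)))"
    by (simp add: sum_distrib_left sum_distrib_right M_append mult.assoc)
  finally have c: "M u * x * M v \<approx> (\<Sum>w\<in>S. smul (c w) (M (u @ w @ v)))" .
  have "(\<Sum>w\<in>S. smul (c w) (M (u @ w @ v))) \<in> span G2"
    using h G by (intro span_sum span_smul span_M) auto
  then show ?thesis by (rule span_cng[OF c])
qed

context
  fixes a assumes a: "a \<in> {1..n}"
begin

lemmas AG' = Alg_gens[OF a]

lemma D_SPS: "Ss a * Pp a * Ss a \<approx> Ss a * Ww a ^ k"
proof -
  have "Ss a * Pp a * Ss a \<approx> smul (q ^ k) (Ww a ^ k - Pp a * Ss a) * Ss a"
    by (intro cng_right AG' D_SP a)
  also have "\<dots> = smul (q ^ k) (Ww a ^ k * Ss a) - smul (q ^ k) (Pp a * (Ss a * Ss a))"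
    by (simp add: algebra_simps smul_simps)
  also have "\<dots> \<approx> smul (q ^ k) (smul (inverse q ^ k) (Ss a * Ww a ^ k)) - smul (q ^ k) (Pp a * 0)"
    by (intro cng_diff cng_smul cng_left AG' D_WjS D_SS a)
  also have "\<dots> = Ss a * Ww a ^ k" by (simp add: power_inverse qk_inv)
  finally show ?thesis .
qed

lemma q2k_nz: "q ^ (2 * k) \<noteq> 0" using qnz by simp

lemma D_SW2k: "Ss a * Ww a ^ (2 * k) \<approx> Ss a"
proof -
  have "Ss a * smul (q ^ (2 * k)) (Ww a ^ (2 * k)) \<approx> Ss a * (1 + smul (q ^ (2 * k) - 1) (Pp a * Ss a * Ww a ^ k))"
    by (intro cng_left AG' D_W2k a)
  also have "\<dots> = Ss a + smul (q ^ (2 * k) - 1) ((Ss a * Pp a * Ss a) * Ww a ^ k)"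
    by (simp add: algebra_simps)
  also have "\<dots> \<approx> Ss a + smul (q ^ (2 * k) - 1) ((Ss a * Ww a ^ k) * Ww a ^ k)"
    by (intro cng_add cng_refl cng_smul cng_right Alg_pow AG' D_SPS)
  finally have h: "Ss a * smul (q ^ (2 * k)) (Ww a ^ (2 * k)) \<approx> Ss a + smul (q ^ (2 * k) - 1) ((Ss a * Ww a ^ k) * Ww a ^ k)" .
  show ?thesis
    by (rule cng_rearr[OF h]) (simp only: pow2k, simp add: algebra_simps smul_simps)
qed

lemma D_PW2k: "Pp a * Ww a ^ (2 * k) \<approx> smul (inverse (q ^ (2 * k))) (Pp a)"
proof -
  have "Pp a * smul (q ^ (2 * k)) (Ww a ^ (2 * k)) \<approx> Pp a * (1 + smul (q ^ (2 * k) - 1) (Pp a * Ss a * Ww a ^ k))"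
    by (intro cng_left AG' D_W2k a)
  also have "\<dots> = Pp a + smul (q ^ (2 * k) - 1) ((Pp a * Pp a) * (Ss a * Ww a ^ k))"
    by (simp add: algebra_simps)
  also have "\<dots> \<approx> Pp a + smul (q ^ (2 * k) - 1) (0 * (Ss a * Ww a ^ k))"
    by (intro cng_add cng_refl cng_smul cng_right Alg_pow Alg_mult AG' D_PP a)
  finally have h: "smul (inverse (q ^ (2 * k))) (Pp a * smul (q ^ (2 * k)) (Ww a ^ (2 * k))) \<approx> smul (inverse (q ^ (2 * k))) (Pp a)"
    by (intro cng_smul) simp
  then show ?thesis using q2k_nz by simp
qed

lemma D_PSW2k: "Pp a * Ss a * Ww a ^ (2 * k) \<approx> Pp a * Ss a"
proof -
  have "Pp a * (Ss a * Ww a ^ (2 * k)) \<approx> Pp a * Ss a" by (intro cng_left AG' D_SW2k)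
  then show ?thesis by (simp add: mult.assoc)
qed

lemma D_W2k': "Ww a ^ (2 * k) \<approx> smul (inverse (q ^ (2 * k))) 1 + smul (1 - inverse (q ^ (2 * k))) (Pp a * Ss a * Ww a ^ k)"
proof -
  have "smul (inverse (q ^ (2 * k))) (smul (q ^ (2 * k)) (Ww a ^ (2 * k))) \<approx>
        smul (inverse (q ^ (2 * k))) (1 + smul (q ^ (2 * k) - 1) (Pp a * Ss a * Ww a ^ k))"
    by (intro cng_smul D_W2k a)
  also have "\<dots> = smul (inverse (q ^ (2 * k))) 1 + smul (1 - inverse (q ^ (2 * k))) (Pp a * Ss a * Ww a ^ k)"
    using q2k_nz by (simp add: smul_simps algebra_simps)
  finally show ?thesis using q2k_nz by simp
qed

lemma grp1: "(v::'a::ab_group_add) - (x - y) = (v + y) - x" by (simp add: algebra_simps)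

lemma pow_pred: assumes "0 < m" shows "(x::'a::monoid_mult) ^ m = x ^ (m - 1) * x"
proof -
  obtain m' where m: "m = Suc m'" using assms by (cases m) auto
  show ?thesis unfolding m by (simp only: power_Suc2 diff_Suc_1)
qed

lemma D_V: "Vv a \<approx> smul (q ^ (2 * k)) (Ww a ^ (2 * k - 1)) - smul (q ^ (2 * k) - 1) (Pp a * Ss a * Ww a ^ (k - 1))"
proof -
  have e1: "Ww a ^ (2 * k) = Ww a ^ (2 * k - 1) * Ww a" using kpos by (intro pow_pred) simp
  have e2: "Ww a ^ k = Ww a ^ (k - 1) * Ww a" using kpos by (intro pow_pred)
  have "smul (q ^ (2 * k)) (Ww a ^ (2 * k)) * Vv a \<approx> (1 + smul (q ^ (2 * k) - 1) (Pp a * Ss a * Ww a ^ k)) * Vv a"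
    by (intro cng_right AG' D_W2k a)
  then have h1: "smul (q ^ (2 * k)) (Ww a ^ (2 * k - 1) * (Ww a * Vv a)) \<approx>
         Vv a + smul (q ^ (2 * k) - 1) (Pp a * (Ss a * (Ww a ^ (k - 1) * (Ww a * Vv a))))"
    by (simp only: e1 e2 distrib_right smul_mult_left mult.assoc mult_1_left)
  have "smul (q ^ (2 * k)) (Ww a ^ (2 * k - 1)) = smul (q ^ (2 * k)) (Ww a ^ (2 * k - 1) * 1)" by simp
  also have "\<dots> \<approx> smul (q ^ (2 * k)) (Ww a ^ (2 * k - 1) * (Ww a * Vv a))"
    by (intro cng_smul cng_left Alg_pow AG' cng_sym[OF rel_WV[OF a a]])
  also note h1
  also have "Vv a + smul (q ^ (2 * k) - 1) (Pp a * (Ss a * (Ww a ^ (k - 1) * (Ww a * Vv a)))) \<approx>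
             Vv a + smul (q ^ (2 * k) - 1) (Pp a * (Ss a * (Ww a ^ (k - 1) * 1)))"
    by (rule cng_add[OF cng_refl cng_smul[OF cng_left[OF AG'(1) cng_left[OF AG'(2) cng_left[OF Alg_pow[OF AG'(3)] rel_WV[OF a a]]]]]])
  finally have h2: "smul (q ^ (2 * k)) (Ww a ^ (2 * k - 1)) \<approx> Vv a + smul (q ^ (2 * k) - 1) (Pp a * Ss a * Ww a ^ (k - 1))"
    by (simp only: mult_1_right mult.assoc)
  show ?thesis by (rule cng_rearr[OF cng_sym[OF h2]]) (rule grp1)
qed

abbreviation "CW \<equiv> {cw a p d v | p d v. p \<le> 1 \<and> d \<le> 1 \<and> v < 2 * k}"

lemma AllW: "p \<le> 1 \<Longrightarrow> d \<le> 1 \<Longrightarrow> Pp a ^ p * Ss a ^ d * Ww a ^ j \<in> span CW"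
proof (induction j arbitrary: p d rule: less_induct)
  case (less j)
  show ?case
  proof (cases "j < 2 * k")
    case True
    then show ?thesis using less.prems by (intro span_M[of "cw a p d j", unfolded M_cw]) blast
  next
    case False
    then obtain j' where j: "j = 2 * k + j'" by (metis le_add_diff_inverse not_less)
    have lt1: "j' < j" and lt2: "k + j' < j" using j kpos by auto
    have IH: "\<And>p d. p \<le> 1 \<Longrightarrow> d \<le> 1 \<Longrightarrow> Pp a ^ p * Ss a ^ d * Ww a ^ j' \<in> span CW"
             "\<And>p d. p \<le> 1 \<Longrightarrow> d \<le> 1 \<Longrightarrow> Pp a ^ p * Ss a ^ d * Ww a ^ (k + j') \<in> span CW"
      using less.IH lt1 lt2 by blast+
    have pw: "Ww a ^ j = Ww a ^ (2 * k) * Ww a ^ j'" by (simp add: j power_add)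
    have "p = 0 \<or> p = 1" "d = 0 \<or> d = 1" using less.prems by auto
    then consider "p = 0" "d = 0" | "p = 1" "d = 0" | "p = 0" "d = 1" | "p = 1" "d = 1" by blast
    then show ?thesis
    proof cases
      case 1
      have "Ww a ^ (2 * k) * Ww a ^ j' \<approx> (smul (inverse (q ^ (2 * k))) 1 + smul (1 - inverse (q ^ (2 * k))) (Pp a * Ss a * Ww a ^ k)) * Ww a ^ j'"
        by (intro cng_right Alg_pow AG' D_W2k')
      also have "\<dots> = smul (inverse (q ^ (2 * k))) (Pp a ^ 0 * Ss a ^ 0 * Ww a ^ j') + smul (1 - inverse (q ^ (2 * k))) (Pp a ^ 1 * Ss a ^ 1 * Ww a ^ (k + j'))"
        by (simp add: distrib_right mult.assoc power_add)
      finally have c: "Pp a ^ p * Ss a ^ d * Ww a ^ j \<approx> smul (inverse (q ^ (2 * k))) (Pp a ^ 0 * Ss a ^ 0 * Ww a ^ j') + smul (1 - inverse (q ^ (2 * k))) (Pp a ^ 1 * Ss a ^ 1 * Ww a ^ (k + j'))"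
        using 1 by (simp add: pw)
      show ?thesis
        by (rule span_cng[OF c]) (intro span_add span_smul IH; simp)
    next
      case 2
      have "Pp a * (Ww a ^ (2 * k) * Ww a ^ j') \<approx> smul (inverse (q ^ (2 * k))) (Pp a) * Ww a ^ j'"
        using cng_right[OF Alg_pow[OF AG'(3)] D_PW2k, of j'] by (simp add: mult.assoc)
      also have "\<dots> = smul (inverse (q ^ (2 * k))) (Pp a ^ 1 * Ss a ^ 0 * Ww a ^ j')" by simp
      finally have c: "Pp a ^ p * Ss a ^ d * Ww a ^ j \<approx> smul (inverse (q ^ (2 * k))) (Pp a ^ 1 * Ss a ^ 0 * Ww a ^ j')"
        using 2 by (simp add: pw)
      show ?thesis
        by (rule span_cng[OF c]) (intro span_smul IH; simp)
    next
      case 3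
      have "Ss a * (Ww a ^ (2 * k) * Ww a ^ j') \<approx> Ss a * Ww a ^ j'"
        using cng_right[OF Alg_pow[OF AG'(3)] D_SW2k, of j'] by (simp add: mult.assoc)
      then have c: "Pp a ^ p * Ss a ^ d * Ww a ^ j \<approx> Pp a ^ 0 * Ss a ^ 1 * Ww a ^ j'"
        using 3 by (simp add: pw)
      show ?thesis
        by (rule span_cng[OF c]) (intro IH; simp)
    next
      case 4
      have "Pp a * Ss a * (Ww a ^ (2 * k) * Ww a ^ j') \<approx> Pp a * Ss a * Ww a ^ j'"
        using cng_right[OF Alg_pow[OF AG'(3)] D_PSW2k, of j'] by (simp add: mult.assoc)
      then have c: "Pp a ^ p * Ss a ^ d * Ww a ^ j \<approx> Pp a ^ 1 * Ss a ^ 1 * Ww a ^ j'"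
        using 4 by (simp add: pw mult.assoc)
      show ?thesis
        by (rule span_cng[OF c]) (intro IH; simp)
    qed
  qed
qed

end
end

context clq
begin

context
  fixes a assumes a: "a \<in> {1..n}"
begin

lemmas AG5 = Alg_gens[OF a]

lemma AllW': "p \<le> 1 \<Longrightarrow> d \<le> 1 \<Longrightarrow> X = Pp a ^ p * Ss a ^ d * Ww a ^ j \<Longrightarrow> X \<in> span (CW a)"
  using AllW[OF a] by simp

lemma CP: "p \<le> 1 \<Longrightarrow> d \<le> 1 \<Longrightarrow> Pp a * (Pp a ^ p * Ss a ^ d * Ww a ^ v) \<in> span (CW a)"
proof -
  assume "p \<le> 1" "d \<le> 1"
  then consider "p = 0" | "p = 1" by linarith
  then show ?thesis
  proof cases
    case 1 then show ?thesis using \<open>d \<le> 1\<close> by (intro AllW'[of 1 d _ v]) (simp_all add: mult.assoc)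
  next
    case 2
    have "Pp a * (Pp a ^ p * Ss a ^ d * Ww a ^ v) = (Pp a * Pp a) * (Ss a ^ d * Ww a ^ v)"
      using 2 by (simp add: mult.assoc)
    also have "\<dots> \<approx> 0 * (Ss a ^ d * Ww a ^ v)"
      by (rule cng_right[OF Alg_mult[OF Alg_pow Alg_pow] D_PP]) (use AG5 a in auto)
    finally show ?thesis using span_0 by (simp add: span_cng)
  qed
qed

lemma CS: "p \<le> 1 \<Longrightarrow> d \<le> 1 \<Longrightarrow> Ss a * (Pp a ^ p * Ss a ^ d * Ww a ^ v) \<in> span (CW a)"
proof -
  assume "p \<le> 1" "d \<le> 1"
  then consider "p = 0" "d = 0" | "p = 0" "d = 1" | "p = 1" "d = 0" | "p = 1" "d = 1" by linarith
  then show ?thesis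
  proof cases
    case 1 then show ?thesis by (intro AllW'[of 0 1 _ v]) simp_all
  next
    case 2
    have "Ss a * (Pp a ^ p * Ss a ^ d * Ww a ^ v) = (Ss a * Ss a) * Ww a ^ v"
      using 2 by (simp add: mult.assoc)
    also have "\<dots> \<approx> 0 * Ww a ^ v"
      by (rule cng_right[OF Alg_pow D_SS]) (use AG5 a in auto)
    finally show ?thesis using span_0 by (simp add: span_cng)
  next
    case 3
    have "Ss a * (Pp a ^ p * Ss a ^ d * Ww a ^ v) = (Ss a * Pp a) * Ww a ^ v"
      using 3 by (simp add: mult.assoc)
    also have "\<dots> \<approx> smul (q ^ k) (Ww a ^ k - Pp a * Ss a) * Ww a ^ v"
      by (rule cng_right[OF Alg_pow D_SP]) (use AG5 a in auto)
    also have "\<dots> = smul (q ^ k) (Pp a ^ 0 * Ss a ^ 0 * Ww a ^ (k + v)) - smul (q ^ k) (Pp a ^ 1 * Ss a ^ 1 * Ww a ^ v)"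
      by (simp add: algebra_simps smul_simps power_add)
    finally show ?thesis
      by (rule span_cng) (intro span_diff span_smul AllW[OF a]; simp)
  next
    case 4
    have "Ss a * (Pp a ^ p * Ss a ^ d * Ww a ^ v) = (Ss a * Pp a * Ss a) * Ww a ^ v"
      using 4 by (simp add: mult.assoc)
    also have "\<dots> \<approx> (Ss a * Ww a ^ k) * Ww a ^ v"
      by (rule cng_right[OF Alg_pow D_SPS]) (use AG5 a in auto)
    also have "\<dots> = Pp a ^ 0 * Ss a ^ 1 * Ww a ^ (k + v)"
      by (simp add: mult.assoc power_add)
    finally show ?thesis
      by (rule span_cng) (intro AllW[OF a]; simp)
  qed
qed

lemma CWw: "p \<le> 1 \<Longrightarrow> d \<le> 1 \<Longrightarrow> Ww a * (Pp a ^ p * Ss a ^ d * Ww a ^ v) \<in> span (CW a)"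
proof -
  assume "p \<le> 1" "d \<le> 1"
  then consider "p = 0" "d = 0" | "p = 0" "d = 1" | "p = 1" "d = 0" | "p = 1" "d = 1" by linarith
  then show ?thesis
  proof cases
    case 1 then show ?thesis by (intro AllW'[of 0 0 _ "Suc v"]) simp_all
  next
    case 2
    have "Ww a * (Pp a ^ p * Ss a ^ d * Ww a ^ v) = (Ww a * Ss a) * Ww a ^ v"
      using 2 by (simp add: mult.assoc)
    also have "\<dots> \<approx> smul (inverse q) (Ss a * Ww a) * Ww a ^ v"
      by (rule cng_right[OF Alg_pow]) (use AG5 rel_WS[OF a a] in auto)
    also have "\<dots> = smul (inverse q) (Pp a ^ 0 * Ss a ^ 1 * Ww a ^ Suc v)"
      by (simp add: mult.assoc)
    finally show ?thesis
      by (rule span_cng) (intro span_smul AllW[OF a]; simp)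
  next
    case 3
    have "Ww a * (Pp a ^ p * Ss a ^ d * Ww a ^ v) = (Ww a * Pp a) * Ww a ^ v"
      using 3 by (simp add: mult.assoc)
    also have "\<dots> \<approx> smul q (Pp a * Ww a) * Ww a ^ v"
      by (rule cng_right[OF Alg_pow]) (use AG5 rel_WP[OF a a] in auto)
    also have "\<dots> = smul q (Pp a ^ 1 * Ss a ^ 0 * Ww a ^ Suc v)"
      by (simp add: mult.assoc)
    finally show ?thesis
      by (rule span_cng) (intro span_smul AllW[OF a]; simp)
  next
    case 4
    have "Ww a * (Pp a ^ p * Ss a ^ d * Ww a ^ v) = (Ww a * Pp a) * (Ss a * Ww a ^ v)"
      using 4 by (simp add: mult.assoc)
    also have "\<dots> \<approx> smul q (Pp a * Ww a) * (Ss a * Ww a ^ v)"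
      by (rule cng_right[OF Alg_mult[OF _ Alg_pow]]) (use AG5 rel_WP[OF a a] in auto)
    also have "\<dots> = smul q (Pp a * ((Ww a * Ss a) * Ww a ^ v))"
      by (simp add: mult.assoc)
    also have "\<dots> \<approx> smul q (Pp a * (smul (inverse q) (Ss a * Ww a) * Ww a ^ v))"
      by (rule cng_smul, rule cng_left, rule AG5, rule cng_right[OF Alg_pow])
         (use AG5 rel_WS[OF a a] in auto)
    also have "\<dots> = Pp a ^ 1 * Ss a ^ 1 * Ww a ^ Suc v"
      using qnz by (simp add: mult.assoc)
    finally show ?thesis
      by (rule span_cng) (intro AllW[OF a]; simp)
  qed
qed

end
end

context clq
begin

definition lowl :: "nat \<Rightarrow> cgen \<Rightarrow> bool" where
  "lowl a y \<longleftrightarrow> (\<exists>b\<in>{1..n}. b \<noteq> a \<and> (y = Psi b \<or> y = PsiS b \<or> y = Om b))"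

lemma cng_neg_swap: "x \<approx> - y \<Longrightarrow> y \<approx> - x"
  unfolding cng_def by (simp add: add.commute)

lemma comm1:
  assumes a: "a \<in> {1..n}" and x: "x = Psi a \<or> x = PsiS a \<or> x = Om a" and y: "lowl a y"
  shows "\<exists>\<tau>. M [x] * M [y] \<approx> smul \<tau> (M [y] * M [x])"
proof -
  obtain b where b: "b \<in> {1..n}" "b \<noteq> a" and y': "y = Psi b \<or> y = PsiS b \<or> y = Om b"
    using y unfolding lowl_def by blast
  have neg: "\<And>z. - z = smul (-1) (z :: 'k fa)" by (simp add: smul_neg_left)
  from x y' show ?thesis
  proof (elim disjE)
    assume "x = Psi a" "y = Psi b"
    then show ?thesis using rel_PP[OF a b(1)] by (metis Pp_def neg)
  next
    assume "x = Psi a" "y = PsiS b"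
    then show ?thesis using rel_PSab[OF a b(1)] b by (metis Pp_def Ss_def neg)
  next
    assume "x = Psi a" "y = Om b"
    then show ?thesis using cng_sym[OF rel_WP[OF b(1) a]] b by (metis Pp_def Ww_def smul_one)
  next
    assume "x = PsiS a" "y = Psi b"
    then show ?thesis using cng_neg_swap[OF rel_PSab[OF b(1) a]] b by (metis Pp_def Ss_def neg)
  next
    assume "x = PsiS a" "y = PsiS b"
    then show ?thesis using rel_SS[OF a b(1)] by (metis Ss_def neg)
  next
    assume "x = PsiS a" "y = Om b"
    then show ?thesis using cng_sym[OF rel_WS[OF b(1) a]] b by (metis Ss_def Ww_def smul_one)
  next
    assume "x = Om a" "y = Psi b"
    then show ?thesis using rel_WP[OF a b(1)] b by (metis Pp_def Ww_def)
  next
    assume "x = Om a" "y = PsiS b"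
    then show ?thesis using rel_WS[OF a b(1)] b by (metis Ss_def Ww_def)
  next
    assume "x = Om a" "y = Om b"
    then show ?thesis using rel_WW[OF a b(1)] by (metis Ww_def smul_one)
  qed
qed

lemma lowl_L: "lowl a y \<Longrightarrow> y \<in> L"
  unfolding lowl_def using letters by blast

lemma commw:
  assumes a: "a \<in> {1..n}" and x: "x = Psi a \<or> x = PsiS a \<or> x = Om a" and u: "\<forall>y\<in>set u. lowl a y"
  shows "\<exists>\<tau>. M [x] * M u \<approx> smul \<tau> (M u * M [x])"
  using u
proof (induction u)
  case Nil then show ?case by (intro exI[of _ 1]) (simp add: M_Nil)
next
  case (Cons y u)
  then obtain \<tau>2 where t2: "M [x] * M u \<approx> smul \<tau>2 (M u * M [x])" by auto
  obtain \<tau>1 where t1: "M [x] * M [y] \<approx> smul \<tau>1 (M [y] * M [x])"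
    using comm1[OF a x] Cons.prems by auto
  have Ly: "set [y] \<subseteq> L" and Lu: "set u \<subseteq> L" using Cons.prems lowl_L by auto
  have "M [x] * M (y # u) = (M [x] * M [y]) * M u" by (simp add: M_Cons[of y u] mult.assoc)
  also have "\<dots> \<approx> smul \<tau>1 (M [y] * M [x]) * M u" by (rule cng_right[OF Alg_M[OF Lu] t1])
  also have "\<dots> = smul \<tau>1 (M [y] * (M [x] * M u))" by (simp add: mult.assoc)
  also have "\<dots> \<approx> smul \<tau>1 (M [y] * smul \<tau>2 (M u * M [x]))"
    by (rule cng_smul, rule cng_left[OF Alg_M[OF Ly] t2])
  also have "\<dots> = smul (\<tau>1 * \<tau>2) (M (y # u) * M [x])" by (simp add: M_Cons[of y u] mult.assoc)
  finally show ?case by blast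
qed

end

lemma upt_split3: "1 \<le> a \<Longrightarrow> a \<le> n \<Longrightarrow> [1..<Suc n] = [1..<a] @ a # [Suc a..<Suc n]"
proof -
  assume h: "1 \<le> a" "a \<le> n"
  have "[1..<a + (Suc n - a)] = [1..<a] @ [a..<a + (Suc n - a)]" by (rule upt_add_eq_append) (use h in simp)
  moreover have "a + (Suc n - a) = Suc n" using h by simp
  ultimately have "[1..<Suc n] = [1..<a] @ [a..<Suc n]" by simp
  also have "[a..<Suc n] = a # [Suc a..<Suc n]" using h by (simp add: upt_conv_Cons)
  finally show ?thesis .
qed

lemma cmw_eq: "cl_monomial_word n p d v = concat (map (\<lambda>b. cw b (p b) (d b) (v b)) [1..<Suc n])"
  by (simp add: cl_monomial_word_def cw_def)

definition pre :: "(nat \<Rightarrow> nat) \<Rightarrow> (nat \<Rightarrow> nat) \<Rightarrow> (nat \<Rightarrow> nat) \<Rightarrow> nat \<Rightarrow> cgen list" where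
  "pre p d v a = concat (map (\<lambda>b. cw b (p b) (d b) (v b)) [1..<a])"
definition suf :: "nat \<Rightarrow> (nat \<Rightarrow> nat) \<Rightarrow> (nat \<Rightarrow> nat) \<Rightarrow> (nat \<Rightarrow> nat) \<Rightarrow> nat \<Rightarrow> cgen list" where
  "suf n p d v a = concat (map (\<lambda>b. cw b (p b) (d b) (v b)) [Suc a..<Suc n])"

lemma decomp:
  assumes "a \<in> {1..n}"
  shows "cl_monomial_word n p d v = pre p d v a @ cw a (p a) (d a) (v a) @ suf n p d v a"
proof -
  have h: "[1..<Suc n] = [1..<a] @ a # [Suc a..<Suc n]" by (rule upt_split3) (use assms in auto)
  show ?thesis unfolding cmw_eq pre_def suf_def h by (simp del: upt_Suc)
qed

lemma decomp_upd:
  assumes "a \<in> {1..n}"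
  shows "cl_monomial_word n (p(a := p')) (d(a := d')) (v(a := v')) = pre p d v a @ cw a p' d' v' @ suf n p d v a"
proof -
  have "pre (p(a := p')) (d(a := d')) (v(a := v')) a = pre p d v a"
    unfolding pre_def by (intro arg_cong[where f = concat] map_cong) auto
  moreover have "suf n (p(a := p')) (d(a := d')) (v(a := v')) a = suf n p d v a"
    unfolding suf_def by (intro arg_cong[where f = concat] map_cong) auto
  ultimately show ?thesis using decomp[OF assms, of "p(a := p')" "d(a := d')" "v(a := v')"] by simp
qed

lemma set_cw: "set (cw b p d v) \<subseteq> {Psi b, PsiS b, Om b}"
  by (auto simp: cw_def)

context clq
begin

abbreviation "BW \<equiv> cl_basis_words n k"

lemma cw_L: "b \<in> {1..n} \<Longrightarrow> set (cw b p d v) \<subseteq> L"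
  using set_cw[of b p d v] letters[of b] by blast

lemma set_pre: assumes "a \<in> {1..n}" shows "\<forall>y\<in>set (pre p d v a). lowl a y"
proof
  fix y assume "y \<in> set (pre p d v a)"
  then obtain b where b: "b \<in> {1..<a}" "y \<in> set (cw b (p b) (d b) (v b))" by (auto simp: pre_def simp del: upt_Suc)
  have "b \<in> {1..n}" "b \<noteq> a" using b assms by auto
  moreover have "y = Psi b \<or> y = PsiS b \<or> y = Om b" using set_cw b(2) by blast
  ultimately show "lowl a y" unfolding lowl_def by blast
qed

lemma set_suf_L: "set (suf n p d v a) \<subseteq> L"
proof
  fix y assume "y \<in> set (suf n p d v a)"
  then obtain b where b: "b \<in> {Suc a..<Suc n}" "y \<in> set (cw b (p b) (d b) (v b))" by (auto simp: suf_def simp del: upt_Suc)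
  then show "y \<in> L" using cw_L[of b] by auto
qed

lemma set_pre_L: "a \<in> {1..n} \<Longrightarrow> set (pre p d v a) \<subseteq> L"
  using set_pre lowl_L by blast

lemma set_cmw_L: "set (cl_monomial_word n p d v) \<subseteq> L"
proof
  fix y assume "y \<in> set (cl_monomial_word n p d v)"
  then obtain b where b: "b \<in> {1..<Suc n}" "y \<in> set (cw b (p b) (d b) (v b))" by (auto simp: cmw_eq simp del: upt_Suc)
  then show "y \<in> L" using cw_L[of b] by auto
qed

lemma BW_L: "w \<in> BW \<Longrightarrow> set w \<subseteq> L"
  unfolding cl_basis_words_def using set_cmw_L by blast

lemma GL:
  assumes a: "a \<in> {1..n}" and x: "x = Psi a \<or> x = PsiS a \<or> x = Om a" and w: "w \<in> BW"
  shows "M [x] * M w \<in> span BW"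
proof -
  obtain p d v where w: "w = cl_monomial_word n p d v"
    and val: "\<forall>b\<in>{1..n}. p b \<in> {0, 1} \<and> d b \<in> {0, 1} \<and> v b \<in> {0..<2*k}"
    using w unfolding cl_basis_words_def by blast
  let ?pre = "pre p d v a" and ?suf = "suf n p d v a" and ?c = "cw a (p a) (d a) (v a)"
  obtain \<tau> where t: "M [x] * M ?pre \<approx> smul \<tau> (M ?pre * M [x])"
    using commw[OF a x set_pre[OF a]] by blast
  have "p a \<in> {0, 1} \<and> d a \<in> {0, 1}" using val a by blast
  then have pa: "p a \<le> 1" "d a \<le> 1" by auto
  have inC: "M [x] * M ?c \<in> span (CW a)"
    using x CP[OF a pa] CS[OF a pa] CWw[OF a pa] by (auto simp: M_cw Pp_def Ss_def Ww_def)
  have G: "\<And>u. u \<in> CW a \<Longrightarrow> ?pre @ u @ ?suf \<in> BW"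
  proof -
    fix u assume "u \<in> CW a"
    then obtain p' d' v' where u: "u = cw a p' d' v'" "p' \<le> 1" "d' \<le> 1" "v' < 2 * k" by blast
    have "?pre @ u @ ?suf = cl_monomial_word n (p(a := p')) (d(a := d')) (v(a := v'))"
      using decomp_upd[OF a] u by simp
    moreover have "\<forall>b\<in>{1..n}. (p(a := p')) b \<in> {0, 1} \<and> (d(a := d')) b \<in> {0, 1} \<and> (v(a := v')) b \<in> {0..<2*k}"
      using val u by auto
    ultimately show "?pre @ u @ ?suf \<in> BW" unfolding cl_basis_words_def by blast
  qed
  have "M [x] * M w = (M [x] * M ?pre) * (M ?c * M ?suf)"
    by (simp add: w decomp[OF a] M_append mult.assoc)
  also have "\<dots> \<approx> smul \<tau> (M ?pre * M [x]) * (M ?c * M ?suf)"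
    by (rule cng_right[OF Alg_mult[OF Alg_M[OF cw_L[OF a]] Alg_M[OF set_suf_L]] t])
  also have "\<dots> = smul \<tau> (M ?pre * (M [x] * M ?c) * M ?suf)" by (simp add: mult.assoc)
  finally show ?thesis
    by (rule span_cng) (intro span_smul span_map[OF inC G set_pre_L[OF a] set_suf_L])
qed

end

context clq
begin

definition lm :: "'k fa \<Rightarrow> bool" where "lm y \<longleftrightarrow> (\<forall>z\<in>span BW. y * z \<in> span BW)"

lemma spanBW_Alg:
  assumes "z \<in> span BW"
  obtains Z where "z \<approx> Z" "Z \<in> Alg" "Z \<in> span BW"
proof -
  obtain S c where h: "finite S" "S \<subseteq> BW" "z \<approx> (\<Sum>w\<in>S. smul (c w) (M w))"
    using assms by (rule spanE)
  have "(\<Sum>w\<in>S. smul (c w) (M w)) \<in> Alg"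
    using h BW_L by (intro Alg_sum Alg_smul Alg_M) auto
  moreover have "(\<Sum>w\<in>S. smul (c w) (M w)) \<in> span BW"
    using h by (intro span_sum span_smul span_M) auto
  ultimately show ?thesis using h that by blast
qed

lemma lm_gen:
  assumes a: "a \<in> {1..n}" and x: "x = Psi a \<or> x = PsiS a \<or> x = Om a"
  shows "lm (M [x])"
  unfolding lm_def
proof
  fix z assume "z \<in> span BW"
  then obtain S c where h: "finite S" "S \<subseteq> BW" "z \<approx> (\<Sum>w\<in>S. smul (c w) (M w))"
    by (rule spanE)
  have xL: "set [x] \<subseteq> L" using x letters[OF a] by auto
  have "M [x] * z \<approx> M [x] * (\<Sum>w\<in>S. smul (c w) (M w))" by (rule cng_left[OF Alg_M[OF xL] h(3)])
  also have "\<dots> = (\<Sum>w\<in>S. smul (c w) (M [x] * M w))" by (simp add: sum_distrib_left)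
  finally have c: "M [x] * z \<approx> (\<Sum>w\<in>S. smul (c w) (M [x] * M w))" .
  have "(\<Sum>w\<in>S. smul (c w) (M [x] * M w)) \<in> span BW"
    using h GL[OF a x] by (intro span_sum span_smul) auto
  then show "M [x] * z \<in> span BW" by (rule span_cng[OF c])
qed

lemma lm_mult: "lm y1 \<Longrightarrow> lm y2 \<Longrightarrow> lm (y1 * y2)"
  unfolding lm_def by (simp add: mult.assoc)
lemma lm_add: "lm y1 \<Longrightarrow> lm y2 \<Longrightarrow> lm (y1 + y2)"
  unfolding lm_def by (simp add: distrib_right span_add)
lemma lm_smul: "lm y1 \<Longrightarrow> lm (smul c y1)"
  unfolding lm_def by (simp add: span_smul)
lemma lm_diff: "lm y1 \<Longrightarrow> lm y2 \<Longrightarrow> lm (y1 - y2)"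
  unfolding lm_def by (simp add: left_diff_distrib span_diff)
lemma lm_one: "lm 1"
  unfolding lm_def by simp
lemma lm_pow: "lm y \<Longrightarrow> lm (y ^ m)"
  by (induction m) (simp_all add: lm_one lm_mult)

lemma lm_V:
  assumes a: "a \<in> {1..n}"
  shows "lm (Vv a)"
  unfolding lm_def
proof
  fix z assume "z \<in> span BW"
  then obtain Z where Z: "z \<approx> Z" "Z \<in> Alg" "Z \<in> span BW" by (rule spanBW_Alg)
  let ?V = "smul (q ^ (2 * k)) (Ww a ^ (2 * k - 1)) - smul (q ^ (2 * k) - 1) (Pp a * Ss a * Ww a ^ (k - 1))"
  have lP: "lm (Pp a)" "lm (Ss a)" "lm (Ww a)"
    using lm_gen[OF a] by (auto simp: Pp_def Ss_def Ww_def)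
  have "lm ?V" by (intro lm_diff lm_smul lm_mult lm_pow lP)
  then have inV: "?V * Z \<in> span BW" using Z unfolding lm_def by blast
  have "Vv a * z \<approx> Vv a * Z" by (rule cng_left[OF Alg_gens(4)[OF a] Z(1)])
  also have "\<dots> \<approx> ?V * Z" by (rule cng_right[OF Z(2) D_V[OF a]])
  finally show "Vv a * z \<in> span BW" by (rule span_cng) (rule inV)
qed

lemma lm_letter: "x \<in> L \<Longrightarrow> lm (M [x])"
proof -
  assume "x \<in> L"
  then obtain a where a: "a \<in> {1..n}" and x: "x = Psi a \<or> x = PsiS a \<or> x = Om a \<or> x = OmInv a"
    unfolding cl_letters_def by blast
  then show ?thesis using lm_gen[OF a] lm_V[OF a] by (auto simp: Vv_def)
qed

lemma zero_BW: "[] \<in> BW"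
proof -
  have "cl_monomial_word n (\<lambda>_. 0) (\<lambda>_. 0) (\<lambda>_. 0) = []" by (simp add: cl_monomial_word_def)
  moreover have "\<forall>a\<in>{1..n}. (\<lambda>_. 0::nat) a \<in> {0, 1} \<and> (\<lambda>_. 0::nat) a \<in> {0, 1} \<and> (\<lambda>_. 0::nat) a \<in> {0..<2*k}"
    using kpos by auto
  ultimately show ?thesis unfolding cl_basis_words_def
    by (intro CollectI exI[of _ "\<lambda>_. 0"]) auto
qed

lemma all_words: "set w \<subseteq> L \<Longrightarrow> M w \<in> span BW"
proof (induction w)
  case Nil then show ?case using span_M[OF zero_BW] by simp
next
  case (Cons x w)
  then have "lm (M [x])" "M w \<in> span BW" by (auto intro: lm_letter)
  then show ?case unfolding lm_def by (simp add: M_Cons[of x w])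
qed

theorem spanning:
  assumes f: "f \<in> free_alg L"
  shows "\<exists>S c. finite S \<and> S \<subseteq> BW \<and> fa_sub f (\<lambda>u. \<Sum>w\<in>S. c w * fa_mono w u) \<in> cl_ideal n k q"
proof -
  let ?T = "{w. f w \<noteq> 0}"
  have T: "finite ?T" "\<And>w. w \<in> ?T \<Longrightarrow> set w \<subseteq> L" using f unfolding free_alg_def by auto
  have eq: "Abs_fa f = (\<Sum>w\<in>?T. smul (f w) (M w))"
  proof (rule fa_eqI)
    fix u
    have "Rep_fa (\<Sum>w\<in>?T. smul (f w) (M w)) u = (\<Sum>w\<in>?T. f w * fa_mono w u)"
      by (simp add: Rep_fa_sum Rep_fa_smul Rep_fa_M)
    also have "\<dots> = (\<Sum>w\<in>?T. if w = u then f w else 0)"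
      by (intro sum.cong refl) (simp add: fa_mono_def)
    also have "\<dots> = f u" using T(1) by (simp add: sum.delta)
    finally show "Rep_fa (Abs_fa f) u = Rep_fa (\<Sum>w\<in>?T. smul (f w) (M w)) u"
      by (simp add: Abs_fa_inverse)
  qed
  have "Abs_fa f \<in> span BW" unfolding eq
    using T by (intro span_sum span_smul all_words) auto
  then obtain S c where h: "finite S" "S \<subseteq> BW" "Abs_fa f \<approx> (\<Sum>w\<in>S. smul (c w) (M w))"
    by (rule spanE)
  have "Rep_fa (Abs_fa f - (\<Sum>w\<in>S. smul (c w) (M w))) = fa_sub f (\<lambda>u. \<Sum>w\<in>S. c w * fa_mono w u)"
    by (simp add: Rep_fa_ops Rep_fa_sum Rep_fa_smul Rep_fa_M Abs_fa_inverse fa_sub_def)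
  then have "fa_sub f (\<lambda>u. \<Sum>w\<in>S. c w * fa_mono w u) \<in> cl_ideal n k q"
    using h(3) unfolding cng_def inI_def by simp
  then show ?thesis using h by blast
qed

end

datatype cls = cE | cF | cP | cS
datatype knd = KP | KS | KW | KV

context clq
begin

abbreviation "NN \<equiv> 2 * k"

definition wq :: "cls \<Rightarrow> 'k" where
  "wq c = (case c of cE \<Rightarrow> 1 | cF \<Rightarrow> 1 | cP \<Rightarrow> q | cS \<Rightarrow> inverse q)"
definition lam :: "cls \<Rightarrow> 'k" where
  "lam c = (case c of cE \<Rightarrow> 1 | cF \<Rightarrow> inverse (q ^ (2 * k)) | cP \<Rightarrow> inverse (q ^ (2 * k)) | cS \<Rightarrow> 1)"

definition pw :: "nat \<Rightarrow> nat" where "pw v = (if v = 0 then NN - 1 else v - 1)"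
definition sw :: "nat \<Rightarrow> nat" where "sw v = (if v = NN - 1 then 0 else v + 1)"
definition ad :: "nat \<Rightarrow> nat" where "ad v = (v + k) mod NN"

fun coefk :: "knd \<Rightarrow> cls \<times> nat \<Rightarrow> 'k" where
  "coefk KW (c, v) = (if v < NN then wq c * (if v = 0 then lam c else 1) else 0)"
| "coefk KV (c, v) = (if v < NN then inverse (wq c) * (if v = NN - 1 then inverse (lam c) else 1) else 0)"
| "coefk KP (c, v) = (if v < NN \<and> (c = cP \<or> c = cE) then 1 else 0)"
| "coefk KS (c, v) = (if v < NN then (if c = cS then 1 else if c = cF then (if k \<le> v then q ^ k else inverse (q ^ k)) else 0) else 0)"

fun srck :: "knd \<Rightarrow> cls \<times> nat \<Rightarrow> cls \<times> nat" where
  "srck KW (c, v) = (c, pw v)"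
| "srck KV (c, v) = (c, sw v)"
| "srck KP (c, v) = (if c = cP then (cF, v) else (cS, ad v))"
| "srck KS (c, v) = (if c = cS then (cE, v) else (cP, ad v))"

definition op1 :: "knd \<Rightarrow> (cls \<times> nat \<Rightarrow> 'k) \<Rightarrow> cls \<times> nat \<Rightarrow> 'k" where
  "op1 \<kappa> h s = coefk \<kappa> s * h (srck \<kappa> s)"

lemma wq_nz: "wq c \<noteq> 0" using qnz by (cases c) (auto simp: wq_def)
lemma lam_nz: "lam c \<noteq> 0" using qnz by (cases c) (auto simp: lam_def)

lemma NN_pos: "0 < NN" "1 \<le> k" "k < NN" using kpos by auto

lemma pw_lt: "v < NN \<Longrightarrow> pw v < NN" using kpos by (auto simp: pw_def)
lemma sw_lt: "v < NN \<Longrightarrow> sw v < NN" using kpos by (auto simp: sw_def)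
lemma ad_lt: "ad v < NN" using kpos by (auto simp: ad_def)
lemma sw_pw: "v < NN \<Longrightarrow> sw (pw v) = v" using kpos by (auto simp: pw_def sw_def)
lemma pw_sw: "v < NN \<Longrightarrow> pw (sw v) = v" using kpos by (auto simp: pw_def sw_def)
lemma ad_cases: "v < NN \<Longrightarrow> ad v = (if v < k then v + k else v - k)"
  using kpos by (auto simp: ad_def mod_if)
lemma pw_ad: "v < NN \<Longrightarrow> pw (ad v) = ad (pw v)"
  using kpos by (auto simp: ad_cases pw_lt pw_def)
lemma ad_ad: "v < NN \<Longrightarrow> ad (ad v) = v"
  using kpos by (auto simp: ad_cases ad_lt)

lemma op1_scal: "op1 \<kappa> (\<lambda>s. c * h s) s = c * op1 \<kappa> h s"
  by (simp add: op1_def)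

lemma coefk_inv: "\<not> snd s < NN \<Longrightarrow> coefk \<kappa> s = 0"
  by (cases s; cases \<kappa>) auto

lemma op1_inv: "\<not> snd s < NN \<Longrightarrow> op1 \<kappa> h s = 0"
  by (simp add: op1_def coefk_inv)

lemma I_WV: "snd s < NN \<Longrightarrow> op1 KW (op1 KV h) s = h s"
  apply (cases s)
  using wq_nz lam_nz pw_lt sw_pw kpos by (auto simp: op1_def pw_def field_simps)

lemma I_VW: "snd s < NN \<Longrightarrow> op1 KV (op1 KW h) s = h s"
  apply (cases s)
  using wq_nz lam_nz sw_lt pw_sw kpos by (auto simp: op1_def sw_def field_simps)

lemma I_PP: "op1 KP (op1 KP h) s = 0"
  by (cases s) (auto simp: op1_def)

lemma I_SS: "op1 KS (op1 KS h) s = 0"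
  by (cases s) (auto simp: op1_def)

lemma I_WP: "op1 KW (op1 KP h) s = q * op1 KP (op1 KW h) s"
proof (cases s)
  case (Pair c v)
  show ?thesis
  proof (cases "v < NN")
    case True
    then show ?thesis using Pair qnz pw_lt[OF True] ad_lt
      by (cases c) (auto simp: op1_def wq_def lam_def pw_ad)
  qed (simp add: op1_def Pair)
qed

lemma scal_WS: "v < NN \<Longrightarrow> (if v = 0 then inverse (q ^ (2 * k)) else 1) * (if k \<le> pw v then q ^ k else inverse (q ^ k))
   = (if k \<le> v then q ^ k else inverse (q ^ k)) * (if ad v = 0 then inverse (q ^ (2 * k)) else 1)"
proof -
  assume v: "v < NN"
  have e: "q ^ (2 * k) = q ^ k * q ^ k" by (simp add: mult_2 power_add)
  consider "v = 0" | "0 < v" "v < k" | "v = k" | "k < v" by linarith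
  then show ?thesis
  proof cases
    case 1
    have "k \<le> pw v" using 1 kpos by (simp add: pw_def)
    moreover have "ad v \<noteq> 0" using 1 kpos by (simp add: ad_def)
    ultimately show ?thesis unfolding e using kpos qnz 1 by (simp add: field_simps)
  next
    case 2
    then have "\<not> k \<le> pw v" by (simp add: pw_def)
    then show ?thesis using 2 v by (simp add: ad_cases)
  next
    case 3
    have "\<not> k \<le> pw v" using 3 kpos by (simp add: pw_def)
    moreover have "ad v = 0" using 3 kpos by (simp add: ad_def mult_2)
    ultimately show ?thesis unfolding e using kpos qnz 3 by (simp add: field_simps)
  next
    case 4
    then have "k \<le> pw v" by (simp add: pw_def)
    then show ?thesis using 4 v by (simp add: ad_cases)
  qed
qed

lemma I_WS: "op1 KW (op1 KS h) s = inverse q * op1 KS (op1 KW h) s"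
proof (cases s)
  case (Pair c v)
  show ?thesis
  proof (cases "v < NN")
    case True
    note T = True
    show ?thesis
    proof (cases c)
      case cF
      have "op1 KW (op1 KS h) s = (if v = 0 then inverse (q ^ (2 * k)) else 1) * (if k \<le> pw v then q ^ k else inverse (q ^ k)) * h (cP, ad (pw v))"
        using Pair cF T pw_lt[OF T] by (simp add: op1_def wq_def lam_def)
      also have "\<dots> = (if k \<le> v then q ^ k else inverse (q ^ k)) * (if ad v = 0 then inverse (q ^ (2 * k)) else 1) * h (cP, pw (ad v))"
        using scal_WS[OF T] pw_ad[OF T] by simp
      also have "\<dots> = inverse q * op1 KS (op1 KW h) s"
        using Pair cF T ad_lt qnz by (simp add: op1_def wq_def lam_def)
      finally show ?thesis .
    qed (use Pair T pw_lt[OF T] qnz in \<open>auto simp: op1_def wq_def lam_def\<close>)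
  qed (simp add: op1_def Pair)
qed

lemma powW: "j < NN \<Longrightarrow> v < NN \<Longrightarrow> (op1 KW ^^ j) h (c, v) = wq c ^ j * (if j \<le> v then 1 else lam c) * h (c, (v + NN - j) mod NN)"
proof (induction j arbitrary: v)
  case 0 then show ?case by simp
next
  case (Suc j)
  have IH: "(op1 KW ^^ j) h (c, pw v) = wq c ^ j * (if j \<le> pw v then 1 else lam c) * h (c, (pw v + NN - j) mod NN)"
    using Suc.IH Suc.prems pw_lt by simp
  have "(op1 KW ^^ Suc j) h (c, v) = wq c * (if v = 0 then lam c else 1) * (op1 KW ^^ j) h (c, pw v)"
    using Suc.prems by (simp add: op1_def)
  also have "\<dots> = wq c ^ Suc j * (if Suc j \<le> v then 1 else lam c) * h (c, (v + NN - Suc j) mod NN)"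
  proof (cases "v = 0")
    case True
    have "(pw v + NN - j) mod NN = (v + NN - Suc j) mod NN"
    proof -
      have "pw v + NN - j = (NN - 1 - j) + NN" using True Suc.prems by (simp add: pw_def)
      moreover have "v + NN - Suc j = NN - 1 - j" using True by simp
      ultimately show ?thesis by simp
    qed
    moreover have "j \<le> NN - 1" using Suc.prems by simp
    ultimately show ?thesis unfolding IH using True Suc.prems by (simp add: pw_def)
  next
    case False
    have "pw v + NN - j = v + NN - Suc j" using False by (simp add: pw_def)
    moreover have "(j \<le> pw v) = (Suc j \<le> v)" using False by (simp add: pw_def) arith
    ultimately show ?thesis unfolding IH using False by (simp add: pw_def)
  qed
  finally show ?case .
qed

lemma powV: "j < NN \<Longrightarrow> v < NN \<Longrightarrow> (op1 KV ^^ j) h (c, v) = inverse (wq c) ^ j * (if v + j < NN then 1 else inverse (lam c)) * h (c, (v + j) mod NN)"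
proof (induction j arbitrary: v)
  case 0 then show ?case by simp
next
  case (Suc j)
  have IH: "(op1 KV ^^ j) h (c, sw v) = inverse (wq c) ^ j * (if sw v + j < NN then 1 else inverse (lam c)) * h (c, (sw v + j) mod NN)"
    using Suc.IH Suc.prems sw_lt by simp
  have "(op1 KV ^^ Suc j) h (c, v) = inverse (wq c) * (if v = NN - 1 then inverse (lam c) else 1) * (op1 KV ^^ j) h (c, sw v)"
    using Suc.prems by (simp add: op1_def)
  also have "\<dots> = inverse (wq c) ^ Suc j * (if v + Suc j < NN then 1 else inverse (lam c)) * h (c, (v + Suc j) mod NN)"
  proof (cases "v = NN - 1")
    case True
    have "(sw v + j) mod NN = (v + Suc j) mod NN"
    proof -
      have "v + Suc j = j + NN" using True Suc.prems by simp
      then show ?thesis using True by (simp add: sw_def)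
    qed
    then show ?thesis unfolding IH using True Suc.prems by (simp add: sw_def)
  next
    case False
    have "sw v + j = v + Suc j" using False by (simp add: sw_def)
    then show ?thesis unfolding IH using False by (simp add: sw_def)
  qed
  finally show ?case .
qed

lemma pow_inv: "0 < j \<Longrightarrow> \<not> snd s < NN \<Longrightarrow> (op1 \<kappa> ^^ j) h s = 0"
  by (cases j) (simp_all add: op1_inv)

lemma I_8: "op1 KP (op1 KS h) s + q ^ k * op1 KS (op1 KP h) s = (op1 KV ^^ k) h s"
proof (cases s)
  case (Pair c v)
  show ?thesis
  proof (cases "v < NN")
    case True
    have e: "q ^ (2 * k) = q ^ k * q ^ k" by (simp add: mult_2 power_add)
    have R: "(op1 KV ^^ k) h s = inverse (wq c) ^ k * (if v < k then 1 else inverse (lam c)) * h (c, ad v)"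
      using powV[OF NN_pos(3) True] Pair by (simp add: ad_def)
    have kv: "(k \<le> v) = (\<not> v < k)" by auto
    show ?thesis unfolding R using Pair True qnz ad_lt
      by (cases c) (auto simp: op1_def wq_def lam_def e power_inverse kv)
  next
    case False then show ?thesis using Pair kpos pow_inv[of k "(c, v)"] by (simp add: op1_def)
  qed
qed

lemma I_9: "op1 KP (op1 KS h) s + inverse (q ^ k) * op1 KS (op1 KP h) s = (op1 KW ^^ k) h s"
proof (cases s)
  case (Pair c v)
  show ?thesis
  proof (cases "v < NN")
    case True
    have e: "q ^ (2 * k) = q ^ k * q ^ k" by (simp add: mult_2 power_add)
    have m: "(v + NN - k) mod NN = ad v" by (simp add: ad_def mult_2)
    have R: "(op1 KW ^^ k) h s = wq c ^ k * (if k \<le> v then 1 else lam c) * h (c, ad v)"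
      using powW[OF NN_pos(3) True] Pair m by simp
    show ?thesis unfolding R using Pair True qnz ad_lt
      by (cases c) (auto simp: op1_def wq_def lam_def e power_inverse)
  next
    case False then show ?thesis using Pair kpos pow_inv[of k "(c, v)"] by (simp add: op1_def)
  qed
qed

end

type_synonym st = "nat \<Rightarrow> cls \<times> nat"

fun kind :: "cgen \<Rightarrow> knd" where
  "kind (Psi a) = KP" | "kind (PsiS a) = KS" | "kind (Om a) = KW" | "kind (OmInv a) = KV"
fun idx :: "cgen \<Rightarrow> nat" where
  "idx (Psi a) = a" | "idx (PsiS a) = a" | "idx (Om a) = a" | "idx (OmInv a) = a"

definition oddc :: "cls \<Rightarrow> bool" where "oddc c \<longleftrightarrow> c = cP \<or> c = cS"
definition oddk :: "knd \<Rightarrow> bool" where "oddk \<kappa> \<longleftrightarrow> \<kappa> = KP \<or> \<kappa> = KS"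

definition sgn :: "nat \<Rightarrow> st \<Rightarrow> 'k::field" where
  "sgn a t = (-1) ^ card {b\<in>{1..<a}. oddc (fst (t b))}"

definition sg :: "cgen \<Rightarrow> st \<Rightarrow> 'k::field" where
  "sg x t = (if oddk (kind x) then sgn (idx x) t else 1)"

lemma sgn_same: "sgn a (t(a := s)) = sgn a t"
  unfolding sgn_def by (rule arg_cong[where f = "\<lambda>m. (-1) ^ m"], rule arg_cong[where f = card]) auto

lemma sg_same: "sg x (t(idx x := s)) = sg x t"
  by (simp add: sg_def sgn_same)

lemma sgn_sq: "sgn a t * sgn a t = (1::'k::field)"
  by (simp add: sgn_def flip: power_add)

lemma sgn_other:
  assumes "b \<noteq> a"
  shows "sgn a (t(b := s)) = (if 1 \<le> b \<and> b < a \<and> oddc (fst s) \<noteq> oddc (fst (t b)) then - sgn a t else (sgn a t :: 'k::field))"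
proof -
  let ?A = "{x\<in>{1..<a}. oddc (fst (t x))}" and ?A' = "{x\<in>{1..<a}. oddc (fst ((t(b := s)) x))}"
  show ?thesis
  proof (cases "1 \<le> b \<and> b < a \<and> oddc (fst s) \<noteq> oddc (fst (t b))")
    case False
    then have "?A' = ?A" using assms by auto
    then have "sgn a (t(b := s)) = (sgn a t :: 'k)" by (simp add: sgn_def)
    then show ?thesis by (subst if_not_P[OF False])
  next
    case True
    show ?thesis
    proof (cases "oddc (fst s)")
      case c: True
      then have "?A' = insert b ?A" "b \<notin> ?A" using True by auto
      then have "card ?A' = Suc (card ?A)" by simp
      then show ?thesis using True by (simp add: sgn_def)
    next
      case c: False
      then have "?A = insert b ?A'" "b \<notin> ?A'" using True by auto
      then have "card ?A = Suc (card ?A')" by simp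
      then show ?thesis using True by (simp add: sgn_def)
    qed
  qed
qed

context clq
begin

definition Op :: "cgen \<Rightarrow> (st \<Rightarrow> 'k) \<Rightarrow> st \<Rightarrow> 'k" where
  "Op x F t = sg x t * coefk (kind x) (t (idx x)) * F (t(idx x := srck (kind x) (t (idx x))))"

lemma parity: "coefk \<kappa> s \<noteq> 0 \<Longrightarrow> oddc (fst (srck \<kappa> s)) = (oddc (fst s) \<noteq> oddk \<kappa>)"
  by (cases s; cases \<kappa>) (auto simp: oddc_def oddk_def split: if_splits)

lemma sg_other:
  assumes "idx z \<noteq> idx x" "1 \<le> idx z" "coefk (kind z) s \<noteq> 0" "s = t (idx z)"
  shows "sg x (t(idx z := srck (kind z) s)) =
    (if oddk (kind x) \<and> oddk (kind z) \<and> idx z < idx x then - sg x t else sg x t)"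
  using sgn_other[OF assms(1), of t "srck (kind z) s"] parity[OF assms(3)] assms
  by (auto simp: sg_def)

lemma cross:
  assumes ab: "idx x \<noteq> idx y" "1 \<le> idx x" "1 \<le> idx y"
  shows "Op x (Op y F) t = (if oddk (kind x) \<and> oddk (kind y) then -1 else 1) * Op y (Op x F) t"
proof -
  define a b where "a = idx x" and "b = idx y"
  define sa sb where "sa = t a" and "sb = t b"
  have ab': "a \<noteq> b" using ab a_def b_def by simp
  have fin: "t(a := srck (kind x) sa, b := srck (kind y) sb) = t(b := srck (kind y) sb, a := srck (kind x) sa)"
    using ab' by (rule fun_upd_twist)
  have L: "Op x (Op y F) t = sg x t * coefk (kind x) sa * (sg y (t(a := srck (kind x) sa)) * coefk (kind y) sb * F (t(a := srck (kind x) sa, b := srck (kind y) sb)))"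
    using ab' by (simp add: Op_def a_def b_def sa_def sb_def)
  have R: "Op y (Op x F) t = sg y t * coefk (kind y) sb * (sg x (t(b := srck (kind y) sb)) * coefk (kind x) sa * F (t(a := srck (kind x) sa, b := srck (kind y) sb)))"
    using ab' fin by (simp add: Op_def a_def b_def sa_def sb_def)
  show ?thesis
  proof (cases "coefk (kind x) sa = 0 \<or> coefk (kind y) sb = 0")
    case True then show ?thesis unfolding L R by auto
  next
    case False
    have s1: "sg y (t(a := srck (kind x) sa)) = (if oddk (kind y) \<and> oddk (kind x) \<and> a < b then - sg y t else sg y t)"
      using sg_other[of x y "sa" t] False ab by (simp add: a_def b_def sa_def)
    have s2: "sg x (t(b := srck (kind y) sb)) = (if oddk (kind x) \<and> oddk (kind y) \<and> b < a then - sg x t else sg x t)"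
      using sg_other[of y x "sb" t] False ab by (simp add: a_def b_def sb_def)
    show ?thesis unfolding L R s1 s2 using ab' by (cases "a < b") (auto simp: algebra_simps)
  qed
qed

lemma slice: "idx x = a \<Longrightarrow> Op x F (t(a := s)) = sg x t * op1 (kind x) (\<lambda>s'. F (t(a := s'))) s"
  by (auto simp: Op_def op1_def sg_same mult.assoc)

lemma comp_same:
  assumes "idx x = a" "idx y = a"
  shows "Op x (Op y F) t = sg x t * sg y t * op1 (kind x) (op1 (kind y) (\<lambda>s. F (t(a := s)))) (t a)"
proof -
  have "Op x (Op y F) t = Op x (Op y F) (t(a := t a))" by simp
  also have "\<dots> = sg x t * op1 (kind x) (\<lambda>s'. Op y F (t(a := s'))) (t a)" by (rule slice[OF assms(1)])
  also have "(\<lambda>s'. Op y F (t(a := s'))) = (\<lambda>s'. sg y t * op1 (kind y) (\<lambda>s. F (t(a := s))) s')"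
    using slice[OF assms(2)] by simp
  finally show ?thesis by (simp add: op1_scal mult.assoc)
qed

primrec act :: "cgen list \<Rightarrow> (st \<Rightarrow> 'k) \<Rightarrow> st \<Rightarrow> 'k" where
  "act [] F = F"
| "act (x # w) F = Op x (act w F)"

lemma act_append: "act (u @ w) F = act u (act w F)"
  by (induction u) auto

lemma pow_same:
  assumes "idx x = a" "\<not> oddk (kind x)"
  shows "act (replicate m x) F (t(a := s)) = (op1 (kind x) ^^ m) (\<lambda>s'. F (t(a := s'))) s"
proof (induction m arbitrary: s)
  case 0 then show ?case by simp
next
  case (Suc m)
  have "act (replicate (Suc m) x) F (t(a := s)) = Op x (act (replicate m x) F) (t(a := s))" by simp
  also have "\<dots> = op1 (kind x) (\<lambda>s'. act (replicate m x) F ((t(a := s))(a := s'))) s"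
    using slice[OF assms(1)] assms(2) by (simp add: sg_def)
  also have "\<dots> = op1 (kind x) ((op1 (kind x) ^^ m) (\<lambda>s'. F (t(a := s')))) s"
    by (rule arg_cong[where f = "\<lambda>h. op1 (kind x) h s"]) (rule ext, subst fun_upd_upd, rule Suc.IH)
  finally show ?case by (simp only: funpow.simps comp_apply)
qed

lemma Op_sum: "Op x (\<lambda>t. \<Sum>i\<in>A. F i t) t = (\<Sum>i\<in>A. Op x (F i) t)"
  by (simp add: Op_def sum_distrib_left)
lemma Op_scal: "Op x (\<lambda>t. c * F t) t = c * Op x F t"
  by (simp add: Op_def)
lemma Op_zero: "Op x (\<lambda>t. 0) = (\<lambda>t. 0)"
  by (simp add: Op_def fun_eq_iff)

lemma act_sum: "act w (\<lambda>t. \<Sum>i\<in>A. F i t) = (\<lambda>t. \<Sum>i\<in>A. act w (F i) t)"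
proof (induction w)
  case (Cons x w) show ?case by (simp add: Cons.IH fun_eq_iff Op_sum)
qed simp
lemma act_scal: "act w (\<lambda>t. c * F t) = (\<lambda>t. c * act w F t)"
proof (induction w)
  case (Cons x w) show ?case by (simp add: Cons.IH fun_eq_iff Op_scal)
qed simp
lemma act_zero: "act w (\<lambda>t. 0) = (\<lambda>t. 0)"
  by (induction w) (simp_all add: Op_zero)

definition valid :: "st \<Rightarrow> bool" where "valid t \<longleftrightarrow> (\<forall>a\<in>{1..n}. snd (t a) < NN)"
definition vs :: "(st \<Rightarrow> 'k) \<Rightarrow> bool" where "vs G \<longleftrightarrow> (\<forall>t. \<not> valid t \<longrightarrow> G t = 0)"

lemma vs_Op: "vs G \<Longrightarrow> vs (Op x G)"
  unfolding vs_def
proof (intro allI impI)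
  fix t assume G: "\<forall>t. \<not> valid t \<longrightarrow> G t = 0" and t: "\<not> valid t"
  then obtain a where a: "a \<in> {1..n}" "\<not> snd (t a) < NN" unfolding valid_def by blast
  show "Op x G t = 0"
  proof (cases "a = idx x")
    case True then show ?thesis using a coefk_inv by (simp add: Op_def)
  next
    case False
    then have "\<not> valid (t(idx x := srck (kind x) (t (idx x))))" using a unfolding valid_def by auto
    then show ?thesis using G by (simp add: Op_def)
  qed
qed

lemma vs_act: "vs G \<Longrightarrow> vs (act w G)"
  by (induction w) (simp_all add: vs_Op)

definition ev :: "(cgen list \<Rightarrow> 'k) \<Rightarrow> (st \<Rightarrow> 'k) \<Rightarrow> st \<Rightarrow> 'k" where
  "ev f G = (\<lambda>t. \<Sum>w\<in>{w. f w \<noteq> 0}. f w * act w G t)"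

definition fs :: "(cgen list \<Rightarrow> 'k) \<Rightarrow> bool" where "fs f \<longleftrightarrow> finite {w. f w \<noteq> 0}"

lemma ev_subset: "finite A \<Longrightarrow> {w. f w \<noteq> 0} \<subseteq> A \<Longrightarrow> ev f G t = (\<Sum>w\<in>A. f w * act w G t)"
  unfolding ev_def by (rule sum.mono_neutral_left) auto

end

lemma fa_mult_gg: "fa_mult (g x) (g y) = fa_mono [x, y]"
  by (simp add: g_def fa_mono_mult)
lemma fa_pow_g: "fa_pow (g x) m = fa_mono (replicate m x)"
  by (induction m) (simp_all add: fa_one_def g_def fa_mono_mult)

context clq
begin

lemma fs_mono: "fs (fa_mono w)"
proof -
  have "{u. fa_mono w u \<noteq> (0::'k)} = {w}" by (auto simp: fa_mono_def)
  then show ?thesis by (simp add: fs_def)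
qed
lemma fs_add: "fs f1 \<Longrightarrow> fs f2 \<Longrightarrow> fs (fa_add f1 f2)"
  unfolding fs_def fa_add_def by (rule finite_subset[of _ "{w. f1 w \<noteq> 0} \<union> {w. f2 w \<noteq> 0}"]) auto
lemma fs_sub: "fs f1 \<Longrightarrow> fs f2 \<Longrightarrow> fs (fa_sub f1 f2)"
  unfolding fs_def fa_sub_def by (rule finite_subset[of _ "{w. f1 w \<noteq> 0} \<union> {w. f2 w \<noteq> 0}"]) auto
lemma fs_smult: "fs f1 \<Longrightarrow> fs (fa_smult c f1)"
  unfolding fs_def fa_smult_def by (rule finite_subset[of _ "{w. f1 w \<noteq> 0}"]) auto

lemma ev_mono: "ev (fa_mono w) G t = act w G t"
proof -
  have "{u. fa_mono w u \<noteq> (0::'k)} = {w}" by (auto simp: fa_mono_def)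
  then show ?thesis by (simp add: ev_def fa_mono_def)
qed

lemma ev_add: "fs f1 \<Longrightarrow> fs f2 \<Longrightarrow> ev (fa_add f1 f2) G t = ev f1 G t + ev f2 G t"
proof -
  assume h: "fs f1" "fs f2"
  let ?A = "{w. f1 w \<noteq> 0} \<union> {w. f2 w \<noteq> 0}"
  have fin: "finite ?A" using h by (simp add: fs_def)
  have "ev (fa_add f1 f2) G t = (\<Sum>w\<in>?A. fa_add f1 f2 w * act w G t)"
    by (rule ev_subset[OF fin]) (auto simp: fa_add_def)
  also have "\<dots> = (\<Sum>w\<in>?A. f1 w * act w G t) + (\<Sum>w\<in>?A. f2 w * act w G t)"
    by (simp add: fa_add_def distrib_right sum.distrib)
  also have "\<dots> = ev f1 G t + ev f2 G t"
    by (simp add: ev_subset[OF fin])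
  finally show ?thesis .
qed

lemma ev_sub: "fs f1 \<Longrightarrow> fs f2 \<Longrightarrow> ev (fa_sub f1 f2) G t = ev f1 G t - ev f2 G t"
proof -
  assume h: "fs f1" "fs f2"
  let ?A = "{w. f1 w \<noteq> 0} \<union> {w. f2 w \<noteq> 0}"
  have fin: "finite ?A" using h by (simp add: fs_def)
  have "ev (fa_sub f1 f2) G t = (\<Sum>w\<in>?A. fa_sub f1 f2 w * act w G t)"
    by (rule ev_subset[OF fin]) (auto simp: fa_sub_def)
  also have "\<dots> = (\<Sum>w\<in>?A. f1 w * act w G t) - (\<Sum>w\<in>?A. f2 w * act w G t)"
    by (simp add: fa_sub_def left_diff_distrib sum_subtractf)
  also have "\<dots> = ev f1 G t - ev f2 G t"
    by (simp add: ev_subset[OF fin])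
  finally show ?thesis .
qed

lemma ev_smult: "fs f1 \<Longrightarrow> ev (fa_smult c f1) G t = c * ev f1 G t"
proof -
  assume h: "fs f1"
  let ?A = "{w. f1 w \<noteq> 0}"
  have fin: "finite ?A" using h by (simp add: fs_def)
  have "ev (fa_smult c f1) G t = (\<Sum>w\<in>?A. fa_smult c f1 w * act w G t)"
    by (rule ev_subset[OF fin]) (auto simp: fa_smult_def)
  also have "\<dots> = c * ev f1 G t"
    by (simp add: fa_smult_def ev_def sum_distrib_left mult.assoc)
  finally show ?thesis .
qed

lemmas ev_simps = ev_add ev_sub ev_smult ev_mono fs_mono fs_add fs_sub fs_smult
  fa_mult_gg fa_pow_g fa_one_def

lemma oddk_simps[simp]: "oddk KP" "oddk KS" "\<not> oddk KW" "\<not> oddk KV"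
  by (simp_all add: oddk_def)

lemma inv_case:
  assumes a: "a \<in> {1..n}" and G: "vs G" and nv: "\<not> snd (t a) < NN"
  shows "G t = 0"
  using G nv a unfolding vs_def valid_def by blast

context
  fixes a b assumes a: "a \<in> {1..n}" and b: "b \<in> {1..n}"
begin

lemma a1: "1 \<le> a" and b1: "1 \<le> b" using a b by auto

lemma m1: "Op (Om a) (Op (Om b) G) t - Op (Om b) (Op (Om a) G) t = 0"
  using cross[of "Om a" "Om b" G t] a1 b1 by (cases "a = b") auto

lemma m2: "vs G \<Longrightarrow> Op (Om a) (Op (OmInv a) G) t - G t = 0"
  using comp_same[of "Om a" a "OmInv a" G t] I_WV[of "t a" "\<lambda>s. G (t(a := s))"]
    op1_inv[of "t a" KW] inv_case[OF a, of G t]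
  by (cases "snd (t a) < NN") (auto simp: sg_def)

lemma m3: "vs G \<Longrightarrow> Op (OmInv a) (Op (Om a) G) t - G t = 0"
  using comp_same[of "OmInv a" a "Om a" G t] I_VW[of "t a" "\<lambda>s. G (t(a := s))"]
    op1_inv[of "t a" KV] inv_case[OF a, of G t]
  by (cases "snd (t a) < NN") (auto simp: sg_def)

lemma m4: "Op (Om a) (Op (Psi b) G) t - (if a = b then q else 1) * Op (Psi b) (Op (Om a) G) t = 0"
proof (cases "a = b")
  case True
  then show ?thesis
    using comp_same[of "Om a" a "Psi a" G t] comp_same[of "Psi a" a "Om a" G t]
      I_WP[of "\<lambda>s. G (t(a := s))" "t a"] by (simp add: sg_def)
qed (use cross[of "Om a" "Psi b" G t] a1 b1 in auto)

lemma m5: "Op (Om a) (Op (PsiS b) G) t - (if a = b then inverse q else 1) * Op (PsiS b) (Op (Om a) G) t = 0"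
proof (cases "a = b")
  case True
  then show ?thesis
    using comp_same[of "Om a" a "PsiS a" G t] comp_same[of "PsiS a" a "Om a" G t]
      I_WS[of "\<lambda>s. G (t(a := s))" "t a"] by (simp add: sg_def)
qed (use cross[of "Om a" "PsiS b" G t] a1 b1 in auto)

lemma m6: "Op (Psi a) (Op (Psi b) G) t + Op (Psi b) (Op (Psi a) G) t = 0"
proof (cases "a = b")
  case True
  then show ?thesis
    using comp_same[of "Psi a" a "Psi a" G t] I_PP[of "\<lambda>s. G (t(a := s))" "t a"] by simp
qed (use cross[of "Psi a" "Psi b" G t] a1 b1 in auto)

lemma m7: "Op (PsiS a) (Op (PsiS b) G) t + Op (PsiS b) (Op (PsiS a) G) t = 0"
proof (cases "a = b")
  case True
  then show ?thesis
    using comp_same[of "PsiS a" a "PsiS a" G t] I_SS[of "\<lambda>s. G (t(a := s))" "t a"] by simp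
qed (use cross[of "PsiS a" "PsiS b" G t] a1 b1 in auto)

lemma m10: "a \<noteq> b \<Longrightarrow> Op (Psi a) (Op (PsiS b) G) t + Op (PsiS b) (Op (Psi a) G) t = 0"
  using cross[of "Psi a" "PsiS b" G t] a1 b1 by auto

lemma m8: "Op (Psi a) (Op (PsiS a) G) t + q ^ k * Op (PsiS a) (Op (Psi a) G) t - act (replicate k (OmInv a)) G t = 0"
proof -
  have sq: "sg (Psi a) t * sg (PsiS a) t = (1::'k)" "sg (PsiS a) t * sg (Psi a) t = (1::'k)"
    by (simp_all add: sg_def sgn_sq)
  have p: "act (replicate k (OmInv a)) G t = (op1 KV ^^ k) (\<lambda>s. G (t(a := s))) (t a)"
    using pow_same[of "OmInv a" a k G t "t a"] by simp
  show ?thesis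
    using comp_same[of "Psi a" a "PsiS a" G t] comp_same[of "PsiS a" a "Psi a" G t]
      I_8[of "\<lambda>s. G (t(a := s))" "t a"] sq p by simp
qed

lemma m9: "Op (Psi a) (Op (PsiS a) G) t + inverse (q ^ k) * Op (PsiS a) (Op (Psi a) G) t - act (replicate k (Om a)) G t = 0"
proof -
  have sq: "sg (Psi a) t * sg (PsiS a) t = (1::'k)" "sg (PsiS a) t * sg (Psi a) t = (1::'k)"
    by (simp_all add: sg_def sgn_sq)
  have p: "act (replicate k (Om a)) G t = (op1 KW ^^ k) (\<lambda>s. G (t(a := s))) (t a)"
    using pow_same[of "Om a" a k G t "t a"] by simp
  show ?thesis
    using comp_same[of "Psi a" a "PsiS a" G t] comp_same[of "PsiS a" a "Psi a" G t]
      I_9[of "\<lambda>s. G (t(a := s))" "t a"] sq p by simp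
qed

end

end

context clq
begin

lemma gen_ok:
  assumes r: "r \<in> cl_relations n k q"
  shows "fs r \<and> (\<forall>G t. vs G \<longrightarrow> ev r G t = 0)"
proof -
  from r obtain a b where a: "a \<in> {1..n}" and b: "b \<in> {1..n}" and
    r': "r \<in> {fa_sub (fa_mult (g (Om a)) (g (Om b))) (fa_mult (g (Om b)) (g (Om a))),
      fa_sub (fa_mult (g (Om a)) (g (OmInv a))) fa_one,
      fa_sub (fa_mult (g (OmInv a)) (g (Om a))) fa_one,
      fa_sub (fa_mult (g (Om a)) (g (Psi b)))
             (fa_smult (if a = b then q else 1) (fa_mult (g (Psi b)) (g (Om a)))),
      fa_sub (fa_mult (g (Om a)) (g (PsiS b)))
             (fa_smult (if a = b then inverse q else 1) (fa_mult (g (PsiS b)) (g (Om a)))),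
      fa_add (fa_mult (g (Psi a)) (g (Psi b))) (fa_mult (g (Psi b)) (g (Psi a))),
      fa_add (fa_mult (g (PsiS a)) (g (PsiS b))) (fa_mult (g (PsiS b)) (g (PsiS a))),
      fa_sub (fa_add (fa_mult (g (Psi a)) (g (PsiS a)))
                     (fa_smult (q ^ k) (fa_mult (g (PsiS a)) (g (Psi a)))))
             (fa_pow (g (OmInv a)) k),
      fa_sub (fa_add (fa_mult (g (Psi a)) (g (PsiS a)))
                     (fa_smult (inverse (q ^ k)) (fa_mult (g (PsiS a)) (g (Psi a)))))
             (fa_pow (g (Om a)) k)}
     \<union> (if a \<noteq> b then
          {fa_add (fa_mult (g (Psi a)) (g (PsiS b))) (fa_mult (g (PsiS b)) (g (Psi a)))}
        else {})"
    unfolding cl_relations_def by blast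
  show ?thesis
    using r' m1[OF a b] m2[OF a b] m3[OF a b] m4[OF a b] m5[OF a b] m6[OF a b] m7[OF a b]
      m8[OF a b] m9[OF a b] m10[OF a b]
    by (auto simp: ev_simps split: if_splits)
qed

lemma hval:
  "fa_mult (fa_mult (fa_mono u) f) (fa_mono w) x =
     (if \<exists>y. x = u @ y @ w then f (drop (length u) (take (length x - length w) x)) else 0)"
proof (cases "\<exists>y. x = u @ y @ w")
  case True
  then obtain y where x: "x = u @ y @ w" by blast
  show ?thesis using x by (simp add: fa_mult_mono_right fa_mult_mono_left)
next
  case False
  have "fa_mult (fa_mult (fa_mono u) f) (fa_mono w) x = 0"
  proof (rule ccontr)
    assume nz: "fa_mult (fa_mult (fa_mono u) f) (fa_mono w) x \<noteq> 0"
    let ?m = "take (length x - length w) x"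
    have c1: "length w \<le> length x" "drop (length x - length w) x = w"
      using nz by (auto simp: fa_mult_mono_right split: if_splits)
    have c2: "take (length u) ?m = u"
      using nz by (auto simp: fa_mult_mono_right fa_mult_mono_left split: if_splits)
    have e1: "x = ?m @ w" using append_take_drop_id[of "length x - length w" x] c1(2) by simp
    have e2: "?m = u @ drop (length u) ?m" using append_take_drop_id[of "length u" ?m] c2 by simp
    have "x = (u @ drop (length u) ?m) @ w" by (rule trans[OF e1 arg_cong[where f="\<lambda>z. z @ w", OF e2]])
    then have "x = u @ drop (length u) ?m @ w" by (simp only: append_assoc)
    then show False using False by blast
  qed
  then show ?thesis using False by simp
qed

lemma h_at: "fa_mult (fa_mult (fa_mono u) f) (fa_mono w) (u @ y @ w) = f y"
  by (subst hval) auto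

lemma h_supp: "{x. fa_mult (fa_mult (fa_mono u) f) (fa_mono w) x \<noteq> 0} \<subseteq> (\<lambda>y. u @ y @ w) ` {y. f y \<noteq> 0}"
proof
  fix x assume "x \<in> {x. fa_mult (fa_mult (fa_mono u) f) (fa_mono w) x \<noteq> 0}"
  then have nz: "fa_mult (fa_mult (fa_mono u) f) (fa_mono w) x \<noteq> 0" by simp
  then obtain y where x: "x = u @ y @ w" by (subst (asm) hval) (auto split: if_splits)
  have "f y \<noteq> 0" using nz unfolding x h_at by simp
  then show "x \<in> (\<lambda>y. u @ y @ w) ` {y. f y \<noteq> 0}" using x by blast
qed

lemma mult_ok:
  assumes fsf: "fs f" and evf: "\<forall>G t. vs G \<longrightarrow> ev f G t = 0"
  shows "fs (fa_mult (fa_mult (fa_mono u) f) (fa_mono w)) \<and>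
    (\<forall>G t. vs G \<longrightarrow> ev (fa_mult (fa_mult (fa_mono u) f) (fa_mono w)) G t = 0)"
proof
  let ?h = "fa_mult (fa_mult (fa_mono u) f) (fa_mono w)"
  let ?S = "{y. f y \<noteq> 0}"
  have fin: "finite ((\<lambda>y. u @ y @ w) ` ?S)" using fsf by (simp add: fs_def)
  then show "fs ?h" unfolding fs_def by (rule finite_subset[OF h_supp])
  show "\<forall>G t. vs G \<longrightarrow> ev ?h G t = 0"
  proof (intro allI impI)
    fix G t assume G: "vs G"
    have inj: "inj_on (\<lambda>y. u @ y @ w) ?S" by (auto simp: inj_on_def)
    have "ev ?h G t = (\<Sum>x\<in>(\<lambda>y. u @ y @ w) ` ?S. ?h x * act x G t)"
      by (rule ev_subset[OF fin h_supp])
    also have "\<dots> = (\<Sum>y\<in>?S. ?h (u @ y @ w) * act (u @ y @ w) G t)"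
      by (rule sum.reindex[OF inj, unfolded comp_def])
    also have "\<dots> = (\<Sum>y\<in>?S. f y * act u (act y (act w G)) t)"
      by (intro sum.cong refl) (simp only: h_at act_append)
    also have "\<dots> = act u (\<lambda>t'. \<Sum>y\<in>?S. f y * act y (act w G) t') t"
      by (simp only: act_sum act_scal)
    also have "(\<lambda>t'. \<Sum>y\<in>?S. f y * act y (act w G) t') = (\<lambda>t'. 0)"
    proof
      fix t' show "(\<Sum>y\<in>?S. f y * act y (act w G) t') = 0"
        using evf vs_act[OF G, of w] unfolding ev_def by blast
    qed
    finally show "ev ?h G t = 0" by (simp only: act_zero)
  qed
qed

lemma ideal_ok:
  "f \<in> two_sided_ideal L (cl_relations n k q) \<Longrightarrow> fs f \<and> (\<forall>G t. vs G \<longrightarrow> ev f G t = 0)"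
proof (induction rule: two_sided_ideal.induct)
  case (gen r) then show ?case by (rule gen_ok)
next
  case zero then show ?case by (simp add: fs_def ev_def)
next
  case (add f1 f2) then show ?case by (simp add: fs_add ev_add)
next
  case (smult f1 c) then show ?case by (simp add: fs_smult ev_smult)
next
  case (mult f1 u w) then show ?case using mult_ok by blast
qed

end

context clq
begin

definition vac1 :: "cls \<times> nat \<Rightarrow> 'k" where
  "vac1 s = (if snd s = 0 \<and> (fst s = cE \<or> fst s = cF) then 1 else 0)"

definition prodv :: "(nat \<Rightarrow> cls \<times> nat \<Rightarrow> 'k) \<Rightarrow> st \<Rightarrow> 'k" where
  "prodv h t = (\<Prod>a\<in>{1..n}. h a (t a))"

definition evs :: "(cls \<times> nat \<Rightarrow> 'k) \<Rightarrow> bool" where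
  "evs h1 \<longleftrightarrow> (\<forall>s. oddc (fst s) \<longrightarrow> h1 s = 0)"

lemma evs_vac1: "evs vac1" by (auto simp: evs_def vac1_def oddc_def)

lemma Op_prodv:
  assumes a: "idx x = a" "a \<in> {1..n}" and ev: "\<forall>b\<in>{1..<a}. evs (h b)"
  shows "Op x (prodv h) = prodv (h(a := op1 (kind x) (h a)))"
proof
  fix t
  let ?s = "srck (kind x) (t a)"
  let ?R = "\<Prod>b\<in>{1..n} - {a}. h b (t b)"
  have fin: "finite {1..n}" by simp
  have "prodv h (t(a := ?s)) = h a ?s * (\<Prod>b\<in>{1..n} - {a}. h b ((t(a := ?s)) b))"
    unfolding prodv_def by (subst prod.remove[OF fin a(2)]) simp
  also have "(\<Prod>b\<in>{1..n} - {a}. h b ((t(a := ?s)) b)) = ?R"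
    by (rule prod.cong) auto
  finally have L0: "prodv h (t(a := ?s)) = h a ?s * ?R" .
  have "Op x (prodv h) t = sg x t * coefk (kind x) (t a) * prodv h (t(a := ?s))"
    by (simp only: Op_def a(1))
  then have L: "Op x (prodv h) t = sg x t * (coefk (kind x) (t a) * h a ?s * ?R)"
    by (simp only: L0 mult.assoc)
  have "prodv (h(a := op1 (kind x) (h a))) t = op1 (kind x) (h a) (t a) * (\<Prod>b\<in>{1..n} - {a}. (h(a := op1 (kind x) (h a))) b (t b))"
    unfolding prodv_def by (subst prod.remove[OF fin a(2)]) simp
  also have "(\<Prod>b\<in>{1..n} - {a}. (h(a := op1 (kind x) (h a))) b (t b)) = ?R"
    by (rule prod.cong) auto
  finally have R0: "prodv (h(a := op1 (kind x) (h a))) t = op1 (kind x) (h a) (t a) * ?R" .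
  have o: "op1 (kind x) (h a) (t a) = coefk (kind x) (t a) * h a ?s" by (simp add: op1_def)
  have R: "prodv (h(a := op1 (kind x) (h a))) t = coefk (kind x) (t a) * h a ?s * ?R"
    unfolding R0 o ..
  show "Op x (prodv h) t = prodv (h(a := op1 (kind x) (h a))) t"
  proof (cases "?R = 0")
    case True then show ?thesis unfolding L R by simp
  next
    case False
    have "{b\<in>{1..<a}. oddc (fst (t b))} = {}"
    proof (rule ccontr)
      assume "{b\<in>{1..<a}. oddc (fst (t b))} \<noteq> {}"
      then obtain b where b: "b \<in> {1..<a}" "oddc (fst (t b))" by blast
      then have "h b (t b) = 0" using ev unfolding evs_def by blast
      moreover have "b \<in> {1..n} - {a}" using b a by auto
      ultimately have "?R = 0" by (intro prod_zero) auto
      then show False using False by simp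
    qed
    then have "sgn a t = (1::'k)" by (simp only: sgn_def card.empty power_0)
    then have "sg x t = (1::'k)" by (simp add: sg_def a(1))
    then show ?thesis unfolding L R by simp
  qed
qed

lemma act_rep_prodv:
  assumes a: "idx x = a" "a \<in> {1..n}" and ev: "\<forall>b\<in>{1..<a}. evs (h b)"
  shows "act (replicate m x) (prodv h) = prodv (h(a := (op1 (kind x) ^^ m) (h a)))"
proof (induction m)
  case 0 then show ?case by simp
next
  case (Suc m)
  have ev': "\<forall>b\<in>{1..<a}. evs ((h(a := (op1 (kind x) ^^ m) (h a))) b)" using ev by auto
  have "act (replicate (Suc m) x) (prodv h) = Op x (act (replicate m x) (prodv h))" by simp
  also have "\<dots> = Op x (prodv (h(a := (op1 (kind x) ^^ m) (h a))))" by (simp only: Suc)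
  also have "\<dots> = prodv ((h(a := (op1 (kind x) ^^ m) (h a)))(a := op1 (kind x) ((h(a := (op1 (kind x) ^^ m) (h a))) a)))"
    by (rule Op_prodv[OF a ev'])
  also have "\<dots> = prodv (h(a := (op1 (kind x) ^^ Suc m) (h a)))" by simp
  finally show ?case .
qed

definition gcomp :: "nat \<Rightarrow> nat \<Rightarrow> nat \<Rightarrow> cls \<times> nat \<Rightarrow> 'k" where
  "gcomp p d v = (op1 KP ^^ p) ((op1 KS ^^ d) ((op1 KW ^^ v) vac1))"

lemma act_cw_prodv:
  assumes a: "a \<in> {1..n}" and ev: "\<forall>b\<in>{1..<a}. evs (h b)"
  shows "act (cw a p d v) (prodv h) = prodv (h(a := (op1 KP ^^ p) ((op1 KS ^^ d) ((op1 KW ^^ v) (h a)))))"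
proof -
  have ev1: "\<forall>b\<in>{1..<a}. evs ((h(a := (op1 KW ^^ v) (h a))) b)" using ev by auto
  have ev2: "\<forall>b\<in>{1..<a}. evs ((h(a := (op1 KS ^^ d) ((op1 KW ^^ v) (h a)))) b)" using ev by auto
  show ?thesis
    unfolding cw_def act_append
    using act_rep_prodv[of "Om a" a h v] act_rep_prodv[of "PsiS a" a _ d] act_rep_prodv[of "Psi a" a _ p]
      a ev ev1 ev2 by simp
qed

definition vac :: "st \<Rightarrow> 'k" where "vac = prodv (\<lambda>_. vac1)"

lemma act_tail:
  assumes j: "1 \<le> j" "j \<le> Suc n"
  shows "act (concat (map (\<lambda>b. cw b (p b) (d b) (v b)) [j..<Suc n])) vac =
    prodv (\<lambda>b. if j \<le> b then gcomp (p b) (d b) (v b) else vac1)"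
  using j(2)
proof (induction j rule: inc_induct)
  case base
  show ?case unfolding vac_def prodv_def by (intro ext prod.cong) auto
next
  case (step m)
  have m: "m \<in> {1..n}" using step j by auto
  let ?h = "\<lambda>b. if Suc m \<le> b then gcomp (p b) (d b) (v b) else vac1"
  have ev: "\<forall>b\<in>{1..<m}. evs (?h b)" using evs_vac1 by auto
  have "[m..<Suc n] = m # [Suc m..<Suc n]" using step by (simp add: upt_conv_Cons)
  then have "act (concat (map (\<lambda>b. cw b (p b) (d b) (v b)) [m..<Suc n])) vac =
      act (cw m (p m) (d m) (v m)) (prodv ?h)"
    using step.IH by (simp add: act_append)
  also have "\<dots> = prodv (?h(m := gcomp (p m) (d m) (v m)))"
    using act_cw_prodv[OF m ev] by (simp add: gcomp_def)
  also have "?h(m := gcomp (p m) (d m) (v m)) = (\<lambda>b. if m \<le> b then gcomp (p b) (d b) (v b) else vac1)"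
    by (auto simp: fun_eq_iff)
  finally show ?case .
qed

lemma act_cmw: "act (cl_monomial_word n p d v) vac = prodv (\<lambda>b. gcomp (p b) (d b) (v b))"
proof -
  have "act (cl_monomial_word n p d v) vac = prodv (\<lambda>b. if 1 \<le> b then gcomp (p b) (d b) (v b) else vac1)"
    unfolding cmw_eq by (rule act_tail) auto
  also have "\<dots> = prodv (\<lambda>b. gcomp (p b) (d b) (v b))"
    unfolding prodv_def by (intro ext prod.cong) auto
  finally show ?thesis .
qed

lemma vs_vac: "vs vac"
  unfolding vs_def
proof (intro allI impI)
  fix t assume "\<not> valid t"
  then obtain a where a: "a \<in> {1..n}" "\<not> snd (t a) < NN" unfolding valid_def by blast
  then have "vac1 (t a) = 0" using kpos by (simp add: vac1_def)
  then show "vac t = 0" unfolding vac_def prodv_def using a by (intro prod_zero) auto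
qed

end

lemma count_replicate: "count_list (replicate m y) x = (if y = x then m else 0)"
  by (induction m) auto

lemma count_concat: "count_list (concat xs) x = sum_list (map (\<lambda>l. count_list l x) xs)"
  by (induction xs) auto

lemma count_cw:
  "count_list (cw b p d v) (Psi a) = (if b = a then p else 0)"
  "count_list (cw b p d v) (PsiS a) = (if b = a then d else 0)"
  "count_list (cw b p d v) (Om a) = (if b = a then v else 0)"
  by (auto simp: cw_def count_replicate)

lemma sum_upt1: "sum_list (map f [1..<Suc n]) = (\<Sum>b\<in>{1..n}. f b)"
proof -
  have "set [1..<Suc n] = {1..n}" by auto
  then show ?thesis using sum_set_upt_conv_sum_list_nat[of f 1 "Suc n"] by simp
qed

lemmas sum_upt1' = sum_upt1[unfolded One_nat_def]

lemma count_cmw: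
  assumes a: "a \<in> {1..n}"
  shows "count_list (cl_monomial_word n p d v) (Psi a) = p a"
    "count_list (cl_monomial_word n p d v) (PsiS a) = d a"
    "count_list (cl_monomial_word n p d v) (Om a) = v a"
  using a by (simp_all add: cmw_eq count_concat comp_def count_cw sum_upt1 sum_upt1' sum.delta' del: upt_Suc)

definition cntP :: "cgen list \<Rightarrow> nat \<Rightarrow> nat" where "cntP w a = count_list w (Psi a)"
definition cntD :: "cgen list \<Rightarrow> nat \<Rightarrow> nat" where "cntD w a = count_list w (PsiS a)"
definition cntV :: "cgen list \<Rightarrow> nat \<Rightarrow> nat" where "cntV w a = count_list w (Om a)"

lemma cmw_cong:
  assumes "\<forall>b\<in>{1..n}. p b = p' b \<and> d b = d' b \<and> v b = v' b"
  shows "cl_monomial_word n p d v = cl_monomial_word n p' d' v'"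
  unfolding cmw_eq using assms by (intro arg_cong[where f = concat] map_cong) auto

context clq
begin

lemma BW_decode:
  assumes "w \<in> BW"
  shows "w = cl_monomial_word n (cntP w) (cntD w) (cntV w)"
    "\<forall>b\<in>{1..n}. cntP w b \<le> 1 \<and> cntD w b \<le> 1 \<and> cntV w b < NN"
proof -
  obtain p d v where w: "w = cl_monomial_word n p d v"
    and val: "\<forall>b\<in>{1..n}. p b \<in> {0, 1} \<and> d b \<in> {0, 1} \<and> v b \<in> {0..<2*k}"
    using assms unfolding cl_basis_words_def by blast
  have c: "\<forall>b\<in>{1..n}. cntP w b = p b \<and> cntD w b = d b \<and> cntV w b = v b"
    using count_cmw w by (simp add: cntP_def cntD_def cntV_def)
  show "w = cl_monomial_word n (cntP w) (cntD w) (cntV w)"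
    using w cmw_cong[of n p "cntP w" d "cntD w" v "cntV w"] c by simp
  show "\<forall>b\<in>{1..n}. cntP w b \<le> 1 \<and> cntD w b \<le> 1 \<and> cntV w b < NN"
    using c val by fastforce
qed

lemma gW: assumes v: "v < NN" shows "(op1 KW ^^ v) vac1 = (\<lambda>s. if snd s = v \<and> (fst s = cE \<or> fst s = cF) then 1 else 0)"
proof
  fix s :: "cls \<times> nat"
  obtain c u where s: "s = (c, u)" by (cases s)
  show "(op1 KW ^^ v) vac1 s = (if snd s = v \<and> (fst s = cE \<or> fst s = cF) then 1 else 0)"
  proof (cases "u < NN")
    case True
    have m: "((u + NN - v) mod NN = 0) = (u = v)"
    proof
      assume "(u + NN - v) mod NN = 0"
      then show "u = v" using True v
        by (cases "v \<le> u") (auto simp: mod_if split: if_splits)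
    qed simp
    show ?thesis unfolding s using powW[OF v True, of vac1 c] m
      by (cases c) (auto simp: vac1_def wq_def)
  next
    case False
    then show ?thesis unfolding s using v pow_inv[of v "(c, u)"] kpos
      by (cases "v = 0") (auto simp: vac1_def)
  qed
qed

definition wit :: "nat \<Rightarrow> nat \<Rightarrow> nat \<Rightarrow> cls \<times> nat" where
  "wit p d v = (if p = 0 then (if d = 0 then (cF, v) else (cS, v)) else (if d = 0 then (cP, v) else (cE, ad v)))"

lemma gvals:
  assumes v: "v < NN"
  shows "gcomp 0 0 v = (\<lambda>s. if snd s = v \<and> (fst s = cE \<or> fst s = cF) then 1 else 0)"
    "gcomp 0 1 v = (\<lambda>s. if s = (cS, v) then 1 else 0)"
    "gcomp 1 0 v = (\<lambda>s. if s = (cP, v) then 1 else 0)"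
    "gcomp 1 1 v = (\<lambda>s. if s = (cE, ad v) then 1 else 0)"
proof -
  show g0: "gcomp 0 0 v = (\<lambda>s. if snd s = v \<and> (fst s = cE \<or> fst s = cF) then 1 else 0)"
    by (simp add: gcomp_def gW[OF v])
  show g1: "gcomp 0 1 v = (\<lambda>s. if s = (cS, v) then 1 else 0)"
  proof
    fix s :: "cls \<times> nat"
    obtain c u where s: "s = (c, u)" by (cases s)
    show "gcomp 0 1 v s = (if s = (cS, v) then 1 else 0)"
      unfolding s using v by (cases c) (auto simp: gcomp_def gW op1_def)
  qed
  show "gcomp 1 0 v = (\<lambda>s. if s = (cP, v) then 1 else 0)"
  proof
    fix s :: "cls \<times> nat"
    obtain c u where s: "s = (c, u)" by (cases s)
    show "gcomp 1 0 v s = (if s = (cP, v) then 1 else 0)"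
      unfolding s using v by (cases c) (auto simp: gcomp_def gW op1_def)
  qed
  show "gcomp 1 1 v = (\<lambda>s. if s = (cE, ad v) then 1 else 0)"
  proof
    fix s :: "cls \<times> nat"
    obtain c u where s: "s = (c, u)" by (cases s)
    have g1': "op1 KS ((op1 KW ^^ v) vac1) = (\<lambda>s. if s = (cS, v) then 1 else 0)"
      using g1 by (simp add: gcomp_def)
    have e: "u < NN \<Longrightarrow> (ad u = v) = (u = ad v)" using ad_ad v ad_lt by metis
    show "gcomp 1 1 v s = (if s = (cE, ad v) then 1 else 0)"
      using g1' v ad_lt e unfolding s
      by (cases c) (auto simp: op1_def gcomp_def)
  qed
qed

lemmas gvals' = gvals[unfolded One_nat_def]

lemma gw1: "p \<le> 1 \<Longrightarrow> d \<le> 1 \<Longrightarrow> v < NN \<Longrightarrow> gcomp p d v (wit p d v) = 1"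
  by (cases "p = 0"; cases "d = 0") (auto simp: gvals gvals' wit_def le_Suc_eq)

lemma gw2:
  assumes "p \<le> 1" "d \<le> 1" "v < NN" "p' \<le> 1" "d' \<le> 1" "v' < NN"
    and "gcomp p d v (wit p' d' v') \<noteq> 0"
  shows "(p = p' \<and> d = d' \<and> v = v') \<or> (p' = 1 \<and> d' = 1 \<and> p = 0 \<and> d = 0)"
proof -
  have p: "p = 0 \<or> p = 1" "d = 0 \<or> d = 1" "p' = 0 \<or> p' = 1" "d' = 0 \<or> d' = 1" using assms by auto
  have inj: "ad v = ad v' \<Longrightarrow> v = v'" using ad_ad assms(3,6) by metis
  show ?thesis using p assms(7) inj by (auto simp: gvals gvals' assms(3,6) wit_def split: if_splits)
qed

end

context clq
begin

definition bt :: "cgen list \<Rightarrow> nat \<Rightarrow> nat \<times> nat \<times> nat" where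
  "bt w b = (cntP w b, cntD w b, cntV w b)"

definition Val :: "cgen list \<Rightarrow> st \<Rightarrow> 'k" where
  "Val w = prodv (\<lambda>b. gcomp (cntP w b) (cntD w b) (cntV w b))"

definition wt :: "cgen list \<Rightarrow> st" where
  "wt w = (\<lambda>b. wit (cntP w b) (cntD w b) (cntV w b))"

definition nzs :: "cgen list \<Rightarrow> nat set" where
  "nzs w = {b\<in>{1..n}. cntP w b \<noteq> 0 \<or> cntD w b \<noteq> 0}"

lemma act_BW: "w \<in> BW \<Longrightarrow> act w vac = Val w"
  using act_cmw[of "cntP w" "cntD w" "cntV w"] BW_decode(1)[of w] by (simp add: Val_def)

lemma Val_self: "w \<in> BW \<Longrightarrow> Val w (wt w) = 1"
  unfolding Val_def prodv_def wt_def using BW_decode(2)[of w]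
  by (intro prod.neutral) (auto intro!: gw1)

lemma Val_lt:
  assumes w: "w \<in> BW" and w': "w' \<in> BW" and ne: "w \<noteq> w'" and nz: "Val w (wt w') \<noteq> 0"
  shows "card (nzs w) < card (nzs w')"
proof -
  have V: "\<forall>b\<in>{1..n}. cntP w b \<le> 1 \<and> cntD w b \<le> 1 \<and> cntV w b < NN"
    "\<forall>b\<in>{1..n}. cntP w' b \<le> 1 \<and> cntD w' b \<le> 1 \<and> cntV w' b < NN"
    using BW_decode(2) w w' by auto
  have f: "\<forall>b\<in>{1..n}. gcomp (cntP w b) (cntD w b) (cntV w b) (wit (cntP w' b) (cntD w' b) (cntV w' b)) \<noteq> 0"
    using nz unfolding Val_def prodv_def wt_def by auto
  have G: "\<And>b. b \<in> {1..n} \<Longrightarrow> (cntP w b = cntP w' b \<and> cntD w b = cntD w' b \<and> cntV w b = cntV w' b) \<or>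
      (cntP w' b = 1 \<and> cntD w' b = 1 \<and> cntP w b = 0 \<and> cntD w b = 0)"
    using V f by (intro gw2) auto
  have sub: "nzs w \<subseteq> nzs w'" unfolding nzs_def using G by fastforce
  obtain b where b: "b \<in> {1..n}" "\<not> (cntP w b = cntP w' b \<and> cntD w b = cntD w' b \<and> cntV w b = cntV w' b)"
  proof (rule ccontr)
    assume "\<not> thesis"
    with that have "\<forall>b\<in>{1..n}. cntP w b = cntP w' b \<and> cntD w b = cntD w' b \<and> cntV w b = cntV w' b" by blast
    then have "cl_monomial_word n (cntP w) (cntD w) (cntV w) = cl_monomial_word n (cntP w') (cntD w') (cntV w')"
      by (rule cmw_cong)
    then show False using ne BW_decode(1)[OF w] BW_decode(1)[OF w'] by simp
  qed
  then have "b \<in> nzs w'" "b \<notin> nzs w" using G[OF b(1)] unfolding nzs_def by auto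
  then have "nzs w \<subset> nzs w'" using sub by blast
  moreover have "finite (nzs w')" unfolding nzs_def by simp
  ultimately show ?thesis by (rule psubset_card_mono[rotated])
qed

theorem independence:
  assumes S: "finite S" "S \<subseteq> BW"
    and I: "(\<lambda>u. \<Sum>w\<in>S. c w * fa_mono w u) \<in> cl_ideal n k q"
  shows "\<forall>w\<in>S. c w = 0"
proof -
  let ?f = "\<lambda>u. \<Sum>w\<in>S. c w * fa_mono w u"
  have fv: "\<And>u. ?f u = (if u \<in> S then c u else 0)"
  proof -
    fix u
    have "?f u = (\<Sum>w\<in>S. if w = u then c w else 0)"
      by (intro sum.cong refl) (auto simp: fa_mono_def)
    then show "?f u = (if u \<in> S then c u else 0)" using S(1) by (simp add: sum.delta')
  qed
  have ok: "\<forall>G t. vs G \<longrightarrow> ev ?f G t = 0"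
    using ideal_ok I unfolding cl_ideal_def by blast
  have E: "\<And>t. (\<Sum>w\<in>S. c w * Val w t) = 0"
  proof -
    fix t
    have "ev ?f vac t = (\<Sum>w\<in>S. ?f w * act w vac t)"
      by (rule ev_subset[OF S(1)]) (use fv in auto)
    also have "\<dots> = (\<Sum>w\<in>S. c w * Val w t)"
      using S(2) by (intro sum.cong refl) (auto simp: fv act_BW)
    finally show "(\<Sum>w\<in>S. c w * Val w t) = 0" using ok vs_vac by simp
  qed
  have "\<forall>w0. w0 \<in> S \<longrightarrow> c w0 = 0"
  proof
    fix w0
    show "w0 \<in> S \<longrightarrow> c w0 = 0"
    proof (induction "card (nzs w0)" arbitrary: w0 rule: less_induct)
      case less
      show ?case
      proof
        assume w0: "w0 \<in> S"
        have "0 = (\<Sum>w\<in>S. c w * Val w (wt w0))" using E by simp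
        also have "\<dots> = c w0 * Val w0 (wt w0) + (\<Sum>w\<in>S - {w0}. c w * Val w (wt w0))"
          by (rule sum.remove[OF S(1) w0])
        also have "(\<Sum>w\<in>S - {w0}. c w * Val w (wt w0)) = 0"
        proof (rule sum.neutral, rule ballI)
          fix w assume w: "w \<in> S - {w0}"
          show "c w * Val w (wt w0) = 0"
          proof (cases "Val w (wt w0) = 0")
            case False
            then have "card (nzs w) < card (nzs w0)"
              using Val_lt[of w w0] w w0 S(2) by auto
            then have "c w = 0" using less w by blast
            then show ?thesis by simp
          qed simp
        qed
        also have "Val w0 (wt w0) = 1" using Val_self w0 S(2) by auto
        finally show "c w0 = 0" by simp
      qed
    qed
  qed
  then show ?thesis by blast
qed

end

theorem theorem3p4:
  fixes q :: "'k::field" and n k :: nat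
  assumes "(2::'k) \<noteq> 0" and "q \<noteq> 0" and "0 < n" and "0 < k"
  shows "(\<forall>f \<in> free_alg (cl_letters n).
            \<exists>S c. finite S \<and> S \<subseteq> cl_basis_words n k \<and>
              fa_sub f (\<lambda>u. \<Sum>w\<in>S. c w * fa_mono w u) \<in> cl_ideal n k q)
       \<and> (\<forall>S c. finite S \<and> S \<subseteq> cl_basis_words n k \<and>
              (\<lambda>u. \<Sum>w\<in>S. c w * fa_mono w u) \<in> cl_ideal n k q
              \<longrightarrow> (\<forall>w\<in>S. c w = (0::'k)))"
  proof -
  interpret clq n k q using assms by unfold_locales auto
  show ?thesis using spanning independence by blast
qed

end
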